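(* Let $(\mu_n)_n\subset\mathcal P_2^L(\mathbb T^d\times\mathbb R)$ and $\mu\in\mathcal P_2^L(\mathbb T^d\times\mathbb R)$. Then $W^L(\mu_n,\mu)\to0$ if and only if (i) $\int|\theta|^2d\mu_n\to\int|\theta|^2d\mu$, and (ii) every subsequence $(\mu_k)_k$ has a further subsequence $(\mu_{k_l})_l$ and a Lebesgue-null set $\mathcal N\subset\mathbb T^d$ such that $\mu^x_{k_l}\rightharpoonup\mu^x$ weakly for all $x\in\mathbb T^d\setminus\mathcal N$.
   Context: $d\ge1$, $\mathbb T^d$ unit torus with Lebesgue measure $dx$. $\mathcal M_1^L(\mathbb T^d\times\mathbb R)$: Borel probability measures on $\mathbb T^d\times\mathbb R$ with first marginal $dx$; each disintegrates as $\mu=\mu^xdx$ with a measurable family of probability measures $\mu^x$ on $\mathbb R$. $\mathcal P_2^L=\{\mu\in\mathcal M_1^L:\int|\theta|^2d\mu<\infty\}$, $W^L(\mu,\nu)^2=\int_{\mathbb T^d}W_2(\mu^x,\nu^x)^2dx$ with $W_2$ the quadratic Wasserstein distance on $\mathcal P_2(\mathbb R)$. *)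

theory Defs
  imports "HOL-Probability.Probability"
begin

text \<open>The torus T^d is represented measure-theoretically by the half-open unit cube
  [0,1)^d in real^'d (a fundamental domain), with Lebesgue (Borel) measure.\<close>

definition torus_set :: "(real ^ 'd) set" where
  "torus_set = {x. \<forall>i. 0 \<le> x $ i \<and> x $ i < 1}"

definition torus :: "(real ^ 'd) measure" where
  "torus = restrict_space lborel torus_set"

definition M1L :: "((real ^ 'd) \<times> real) measure set" where
  "M1L = {M. sets M = sets (torus \<Otimes>\<^sub>M (borel :: real measure)) \<and> prob_space M
              \<and> distr M torus fst = torus}"

definition P2L :: "((real ^ 'd) \<times> real) measure set" where
  "P2L = {M. M \<in> M1L \<and> (\<integral>\<^sup>+ z. ennreal ((snd z)\<^sup>2) \<partial>M) < \<infinity>}"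

definition disintegration :: "((real ^ 'd) \<times> real) measure \<Rightarrow> ((real ^ 'd) \<Rightarrow> real measure) \<Rightarrow> bool" where
  "disintegration M K \<longleftrightarrow>
     K \<in> measurable torus (prob_algebra (borel :: real measure)) \<and>
     (\<forall>A \<in> sets M. emeasure M A = (\<integral>\<^sup>+ x. emeasure (K x) (Pair x -` A) \<partial>torus))"

definition couplings :: "real measure \<Rightarrow> real measure \<Rightarrow> (real \<times> real) measure set" where
  "couplings \<mu> \<nu> = {\<pi>. sets \<pi> = sets (borel \<Otimes>\<^sub>M (borel :: real measure)) \<and> prob_space \<pi> \<and>
                      distr \<pi> borel fst = \<mu> \<and> distr \<pi> borel snd = \<nu>}"

definition W2sq :: "real measure \<Rightarrow> real measure \<Rightarrow> ennreal" where
  "W2sq \<mu> \<nu> = (INF \<pi> \<in> couplings \<mu> \<nu>. \<integral>\<^sup>+ p. ennreal ((fst p - snd p)\<^sup>2) \<partial>\<pi>)"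

definition W2 :: "real measure \<Rightarrow> real measure \<Rightarrow> real" where
  "W2 \<mu> \<nu> = sqrt (enn2real (W2sq \<mu> \<nu>))"

definition WL :: "((real ^ 'd) \<Rightarrow> real measure) \<Rightarrow> ((real ^ 'd) \<Rightarrow> real measure) \<Rightarrow> real" where
  "WL K L = sqrt (enn2real (\<integral>\<^sup>+ x. ennreal ((W2 (K x) (L x))\<^sup>2) \<partial>torus))"

definition weakly_conv :: "(nat \<Rightarrow> real measure) \<Rightarrow> real measure \<Rightarrow> bool" where
  "weakly_conv \<mu>s \<mu> \<longleftrightarrow>
     (\<forall>f :: real \<Rightarrow> real. continuous_on UNIV f \<longrightarrow> bounded (range f) \<longrightarrow>
        (\<lambda>n. \<integral> t. f t \<partial>(\<mu>s n)) \<longlonglongrightarrow> (\<integral> t. f t \<partial>\<mu>))"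

end

theory Submission imports Defs begin

definition m2 :: "real measure \<Rightarrow> ennreal" where
  "m2 P = (\<integral>\<^sup>+ t. ennreal (t\<^sup>2) \<partial>P)"

lemma distr_pair_snd_rd:
  assumes P: "real_distribution P" and Q: "real_distribution Q"
  shows "distr (P \<Otimes>\<^sub>M Q) borel snd = Q"
proof (intro measure_eqI)
  interpret P: real_distribution P by fact
  interpret Q: real_distribution Q by fact
  interpret pair_sigma_finite P Q ..
  fix A assume A: "A \<in> sets (distr (P \<Otimes>\<^sub>M Q) borel snd)"
  then have "emeasure (distr (P \<Otimes>\<^sub>M Q) borel snd) A = emeasure (P \<Otimes>\<^sub>M Q) (UNIV \<times> A)"
    by (auto simp add: emeasure_distr space_pair_measure intro!: arg_cong2[where f=emeasure])
  also have "\<dots> = emeasure P (space P) * emeasure Q A"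
    using A Q.emeasure_pair_measure_Times[of UNIV P A] by simp
  also have "\<dots> = emeasure Q A" using P.emeasure_space_1 by simp
  finally show "emeasure (distr (P \<Otimes>\<^sub>M Q) borel snd) A = emeasure Q A" .
qed (simp add: real_distribution.events_eq_borel[OF Q])

lemma distr_pair_fst_rd:
  assumes P: "real_distribution P" and Q: "real_distribution Q"
  shows "distr (P \<Otimes>\<^sub>M Q) borel fst = P"
proof (intro measure_eqI)
  interpret P: real_distribution P by fact
  interpret Q: real_distribution Q by fact
  interpret pair_sigma_finite P Q ..
  fix A assume A: "A \<in> sets (distr (P \<Otimes>\<^sub>M Q) borel fst)"
  then have "emeasure (distr (P \<Otimes>\<^sub>M Q) borel fst) A = emeasure (P \<Otimes>\<^sub>M Q) (A \<times> UNIV)"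
    by (auto simp add: emeasure_distr space_pair_measure intro!: arg_cong2[where f=emeasure])
  also have "\<dots> = emeasure P A * emeasure Q (space Q)"
    using A Q.emeasure_pair_measure_Times[of A P UNIV] by simp
  also have "\<dots> = emeasure P A" using Q.emeasure_space_1 by simp
  finally show "emeasure (distr (P \<Otimes>\<^sub>M Q) borel fst) A = emeasure P A" .
qed (simp add: real_distribution.events_eq_borel[OF P])

lemma coupling_prod:
  assumes P: "real_distribution P" and Q: "real_distribution Q"
  shows "P \<Otimes>\<^sub>M Q \<in> couplings P Q"
  using distr_pair_fst_rd[OF assms] distr_pair_snd_rd[OF assms] assms
  unfolding couplings_def real_distribution_def real_distribution_axioms_def
  by (auto intro!: sets_pair_measure_cong prob_space_pair)

lemma coupling_meas:
  assumes "\<pi> \<in> couplings P Q" and "h \<in> borel_measurable (borel \<Otimes>\<^sub>M borel)"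
  shows "h \<in> borel_measurable \<pi>"
  using assms measurable_cong_sets[of \<pi> "borel \<Otimes>\<^sub>M borel" borel borel] by (auto simp: couplings_def)

lemma coupling_fst:
  assumes "\<pi> \<in> couplings P Q" and [measurable]: "g \<in> borel_measurable borel"
  shows "(\<integral>\<^sup>+ p. g (fst p) \<partial>\<pi>) = (\<integral>\<^sup>+ t. g t \<partial>P)"
proof -
  have s: "sets \<pi> = sets (borel \<Otimes>\<^sub>M borel)" and d: "distr \<pi> borel fst = P"
    using assms by (auto simp: couplings_def)
  have "fst \<in> measurable \<pi> borel" by (rule coupling_meas[OF assms(1)]) simp
  then have "(\<integral>\<^sup>+ t. g t \<partial>distr \<pi> borel fst) = (\<integral>\<^sup>+ p. g (fst p) \<partial>\<pi>)"
    by (intro nn_integral_distr) auto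
  then show ?thesis using d by simp
qed

lemma coupling_snd:
  assumes "\<pi> \<in> couplings P Q" and [measurable]: "g \<in> borel_measurable borel"
  shows "(\<integral>\<^sup>+ p. g (snd p) \<partial>\<pi>) = (\<integral>\<^sup>+ t. g t \<partial>Q)"
proof -
  have s: "sets \<pi> = sets (borel \<Otimes>\<^sub>M borel)" and d: "distr \<pi> borel snd = Q"
    using assms by (auto simp: couplings_def)
  have "snd \<in> measurable \<pi> borel" by (rule coupling_meas[OF assms(1)]) simp
  then have "(\<integral>\<^sup>+ t. g t \<partial>distr \<pi> borel snd) = (\<integral>\<^sup>+ p. g (snd p) \<partial>\<pi>)"
    by (intro nn_integral_distr) auto
  then show ?thesis using d by simp
qed

lemma W2sq_le_cost: "\<pi> \<in> couplings P Q \<Longrightarrow> W2sq P Q \<le> (\<integral>\<^sup>+ p. ennreal ((fst p - snd p)\<^sup>2) \<partial>\<pi>)"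
  unfolding W2sq_def by (rule INF_lower)

lemma sq_diff_le: "((a::real) - b)\<^sup>2 \<le> 2 * a\<^sup>2 + 2 * b\<^sup>2"
proof -
  have "(a-b)\<^sup>2 + (a+b)\<^sup>2 = 2 * a\<^sup>2 + 2 * b\<^sup>2" by (simp add: power2_eq_square algebra_simps)
  moreover have "0 \<le> (a+b)\<^sup>2" by simp
  ultimately show ?thesis by linarith
qed

lemma nn_integral_2sq: "(\<integral>\<^sup>+ t. ennreal (2 * g t) \<partial>M) = 2 * (\<integral>\<^sup>+ t. ennreal (g t) \<partial>M)"
  if "g \<in> borel_measurable M" "\<And>t. 0 \<le> g t" for g :: "'a \<Rightarrow> real"
proof -
  have "(\<integral>\<^sup>+ t. ennreal (2 * g t) \<partial>M) = (\<integral>\<^sup>+ t. 2 * ennreal (g t) \<partial>M)"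
    using that by (intro nn_integral_cong) (simp add: ennreal_mult)
  also have "\<dots> = 2 * (\<integral>\<^sup>+ t. ennreal (g t) \<partial>M)"
    using that by (intro nn_integral_cmult) auto
  finally show ?thesis .
qed

lemma W2sq_le_m2:
  assumes P: "real_distribution P" and Q: "real_distribution Q"
  shows "W2sq P Q \<le> 2 * m2 P + 2 * m2 Q"
proof -
  let ?\<pi> = "P \<Otimes>\<^sub>M Q"
  have c: "?\<pi> \<in> couplings P Q" by (rule coupling_prod[OF assms])
  have m1: "(\<lambda>p. 2 * (fst p)\<^sup>2) \<in> borel_measurable ?\<pi>"
    by (rule coupling_meas[OF c]) simp
  have m2': "(\<lambda>p. 2 * (snd p)\<^sup>2) \<in> borel_measurable ?\<pi>"
    by (rule coupling_meas[OF c]) simp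
  have "W2sq P Q \<le> (\<integral>\<^sup>+ p. ennreal ((fst p - snd p)\<^sup>2) \<partial>?\<pi>)" by (rule W2sq_le_cost[OF c])
  also have "\<dots> \<le> (\<integral>\<^sup>+ p. (ennreal (2 * (fst p)\<^sup>2) + ennreal (2 * (snd p)\<^sup>2)) \<partial>?\<pi>)"
  proof (rule nn_integral_mono)
    fix p :: "real \<times> real"
    have "ennreal ((fst p - snd p)\<^sup>2) \<le> ennreal (2 * (fst p)\<^sup>2 + 2 * (snd p)\<^sup>2)"
      by (rule ennreal_leI) (rule sq_diff_le)
    also have "\<dots> = ennreal (2 * (fst p)\<^sup>2) + ennreal (2 * (snd p)\<^sup>2)"
      by (rule ennreal_plus) auto
    finally show "ennreal ((fst p - snd p)\<^sup>2) \<le> ennreal (2 * (fst p)\<^sup>2) + ennreal (2 * (snd p)\<^sup>2)" .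
  qed
  also have "\<dots> = (\<integral>\<^sup>+ p. ennreal (2 * (fst p)\<^sup>2) \<partial>?\<pi>) + (\<integral>\<^sup>+ p. ennreal (2 * (snd p)\<^sup>2) \<partial>?\<pi>)"
    by (rule nn_integral_add) (use m1 m2' in auto)
  also have "(\<integral>\<^sup>+ p. ennreal (2 * (fst p)\<^sup>2) \<partial>?\<pi>) = (\<integral>\<^sup>+ t. ennreal (2 * t\<^sup>2) \<partial>P)"
    by (rule coupling_fst[OF c, of "\<lambda>t. ennreal (2 * t\<^sup>2)"]) simp
  also have "(\<integral>\<^sup>+ p. ennreal (2 * (snd p)\<^sup>2) \<partial>?\<pi>) = (\<integral>\<^sup>+ t. ennreal (2 * t\<^sup>2) \<partial>Q)"
    by (rule coupling_snd[OF c, of "\<lambda>t. ennreal (2 * t\<^sup>2)"]) simp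
  also have "(\<integral>\<^sup>+ t. ennreal (2 * t\<^sup>2) \<partial>P) = 2 * m2 P"
    unfolding m2_def using P by (intro nn_integral_2sq) (auto simp: real_distribution_def real_distribution_axioms_def)
  also have "(\<integral>\<^sup>+ t. ennreal (2 * t\<^sup>2) \<partial>Q) = 2 * m2 Q"
    unfolding m2_def using Q by (intro nn_integral_2sq) (auto simp: real_distribution_def real_distribution_axioms_def)
  finally show ?thesis .
qed

lemma W2_sq_le: "ennreal ((W2 P Q)\<^sup>2) \<le> W2sq P Q"
  unfolding W2_def by (cases "W2sq P Q") (auto simp: enn2real_nonneg)

lemma W2_sq_eq: "W2sq P Q < top \<Longrightarrow> ennreal ((W2 P Q)\<^sup>2) = W2sq P Q"
  unfolding W2_def by (cases "W2sq P Q") (auto simp: enn2real_nonneg)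

lemma sq_split_ineq:
  fixes s t e :: real assumes e: "0 < e"
  shows "s\<^sup>2 \<le> (1 + e) * t\<^sup>2 + (1 + 1/e) * (s - t)\<^sup>2"
proof -
  have "(1 + e) * t\<^sup>2 + (1 + 1/e) * (s - t)\<^sup>2 - s\<^sup>2 = (e * t - (s - t))\<^sup>2 / e"
    using e by (simp add: field_simps power2_eq_square)
  moreover have "0 \<le> (e * t - (s - t))\<^sup>2 / e" using e by simp
  ultimately show ?thesis by linarith
qed

lemma coupling_integrable_fst:
  fixes f :: "real \<Rightarrow> real"
  assumes c: "\<pi> \<in> couplings P Q" and [measurable]: "f \<in> borel_measurable borel" and b: "\<And>t. \<bar>f t\<bar> \<le> B"
  shows "integrable \<pi> (\<lambda>p. f (fst p))" "integrable \<pi> (\<lambda>p. f (snd p))"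
proof -
  interpret prob_space \<pi> using c by (auto simp: couplings_def)
  have "(\<lambda>p. f (fst p)) \<in> borel_measurable \<pi>" "(\<lambda>p. f (snd p)) \<in> borel_measurable \<pi>"
    by (rule coupling_meas[OF c]; simp)+
  then show "integrable \<pi> (\<lambda>p. f (fst p))" "integrable \<pi> (\<lambda>p. f (snd p))"
    using b by (auto intro!: integrable_const_bound[where B=B])
qed

lemma coupling_integral_fst:
  fixes f :: "real \<Rightarrow> real"
  assumes c: "\<pi> \<in> couplings P Q" and [measurable]: "f \<in> borel_measurable borel"
  shows "(\<integral> t. f t \<partial>P) = (\<integral> p. f (fst p) \<partial>\<pi>)" "(\<integral> t. f t \<partial>Q) = (\<integral> p. f (snd p) \<partial>\<pi>)"
proof -
  have d: "distr \<pi> borel fst = P" "distr \<pi> borel snd = Q" using c by (auto simp: couplings_def)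
  have "fst \<in> measurable \<pi> borel" "snd \<in> measurable \<pi> borel" by (rule coupling_meas[OF c]; simp)+
  then show "(\<integral> t. f t \<partial>P) = (\<integral> p. f (fst p) \<partial>\<pi>)" "(\<integral> t. f t \<partial>Q) = (\<integral> p. f (snd p) \<partial>\<pi>)"
    using integral_distr[of fst \<pi> borel f] integral_distr[of snd \<pi> borel f] d by auto
qed

lemma W2sq_approx:
  assumes "W2sq P Q < top" "0 < e"
  shows "\<exists>\<pi>\<in>couplings P Q. (\<integral>\<^sup>+ p. ennreal ((fst p - snd p)\<^sup>2) \<partial>\<pi>) < W2sq P Q + ennreal e"
proof -
  have "W2sq P Q < W2sq P Q + ennreal e" using assms by (cases "W2sq P Q") (auto simp: ennreal_plus[symmetric] intro!: ennreal_lessI simp del: ennreal_plus)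
  then show ?thesis unfolding W2sq_def[of P Q] by (subst (asm) (1) INF_less_iff) auto
qed

lemma m2_le_W2sq:
  assumes P: "real_distribution P" and Q: "real_distribution Q" and fin: "W2sq P Q < top" and e: "0 < e"
  shows "m2 P \<le> ennreal (1 + e) * m2 Q + ennreal (1 + 1/e) * W2sq P Q"
proof (rule ennreal_le_epsilon)
  fix d :: real assume d: "0 < d"
  define c where "c = 1 + 1/e"
  have c: "0 < c" using e by (simp add: c_def add_pos_pos)
  obtain \<pi> where \<pi>: "\<pi> \<in> couplings P Q"
    and cost: "(\<integral>\<^sup>+ p. ennreal ((fst p - snd p)\<^sup>2) \<partial>\<pi>) < W2sq P Q + ennreal (d / c)"
    using W2sq_approx[OF fin, of "d/c"] d c by auto
  have m1: "(\<lambda>p. (1 + e) * (snd p)\<^sup>2) \<in> borel_measurable \<pi>" by (rule coupling_meas[OF \<pi>]) simp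
  have m3: "(\<lambda>p. c * (fst p - snd p)\<^sup>2) \<in> borel_measurable \<pi>" by (rule coupling_meas[OF \<pi>]) simp
  have m4: "(\<lambda>p. (fst p - snd p)\<^sup>2) \<in> borel_measurable \<pi>" by (rule coupling_meas[OF \<pi>]) simp
  have m5: "(\<lambda>p. (snd p)\<^sup>2) \<in> borel_measurable \<pi>" by (rule coupling_meas[OF \<pi>]) simp
  have "m2 P = (\<integral>\<^sup>+ p. ennreal ((fst p)\<^sup>2) \<partial>\<pi>)"
    unfolding m2_def by (rule coupling_fst[OF \<pi>, symmetric]) simp
  also have "\<dots> \<le> (\<integral>\<^sup>+ p. (ennreal ((1 + e) * (snd p)\<^sup>2) + ennreal (c * (fst p - snd p)\<^sup>2)) \<partial>\<pi>)"
  proof (rule nn_integral_mono)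
    fix p :: "real \<times> real"
    have "ennreal ((fst p)\<^sup>2) \<le> ennreal ((1 + e) * (snd p)\<^sup>2 + c * (fst p - snd p)\<^sup>2)"
      unfolding c_def by (rule ennreal_leI) (rule sq_split_ineq[OF e])
    also have "\<dots> = ennreal ((1 + e) * (snd p)\<^sup>2) + ennreal (c * (fst p - snd p)\<^sup>2)"
      using e c by (intro ennreal_plus) auto
    finally show "ennreal ((fst p)\<^sup>2) \<le> ennreal ((1 + e) * (snd p)\<^sup>2) + ennreal (c * (fst p - snd p)\<^sup>2)" .
  qed
  also have "\<dots> = (\<integral>\<^sup>+ p. ennreal ((1 + e) * (snd p)\<^sup>2) \<partial>\<pi>) + (\<integral>\<^sup>+ p. ennreal (c * (fst p - snd p)\<^sup>2) \<partial>\<pi>)"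
    by (rule nn_integral_add) (use m1 m3 in auto)
  also have "(\<integral>\<^sup>+ p. ennreal ((1 + e) * (snd p)\<^sup>2) \<partial>\<pi>) = ennreal (1 + e) * (\<integral>\<^sup>+ p. ennreal ((snd p)\<^sup>2) \<partial>\<pi>)"
    using e m5 by (subst nn_integral_cmult[symmetric]) (auto intro!: nn_integral_cong simp: ennreal_mult)
  also have "(\<integral>\<^sup>+ p. ennreal ((snd p)\<^sup>2) \<partial>\<pi>) = m2 Q"
    unfolding m2_def by (rule coupling_snd[OF \<pi>]) simp
  also have "(\<integral>\<^sup>+ p. ennreal (c * (fst p - snd p)\<^sup>2) \<partial>\<pi>) = ennreal c * (\<integral>\<^sup>+ p. ennreal ((fst p - snd p)\<^sup>2) \<partial>\<pi>)"
    using c m4 by (subst nn_integral_cmult[symmetric]) (auto intro!: nn_integral_cong simp: ennreal_mult)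
  also have "\<dots> \<le> ennreal c * (W2sq P Q + ennreal (d / c))"
    using cost by (intro mult_left_mono) auto
  also have "\<dots> = ennreal c * W2sq P Q + ennreal d"
  proof -
    have "ennreal c * ennreal (d / c) = ennreal d" using c d by (simp add: ennreal_mult[symmetric])
    then show ?thesis by (simp add: distrib_left)
  qed
  finally show "m2 P \<le> ennreal (1 + e) * m2 Q + ennreal (1 + 1/e) * W2sq P Q + ennreal d"
    unfolding c_def by (simp add: add.assoc)
qed

lemma amgm_lip: "\<bar>l\<bar> * L * \<bar>x\<bar> \<le> x\<^sup>2 + l\<^sup>2 * L\<^sup>2 / 4" for l L x :: real
proof -
  have "x\<^sup>2 + l\<^sup>2 * L\<^sup>2 / 4 - \<bar>l\<bar> * L * \<bar>x\<bar> = (\<bar>x\<bar> - \<bar>l\<bar> * L / 2)\<^sup>2"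
    by (simp add: power2_eq_square field_simps abs_mult_self_eq)
  moreover have "0 \<le> (\<bar>x\<bar> - \<bar>l\<bar> * L / 2)\<^sup>2" by simp
  ultimately show ?thesis by linarith
qed

lemma lip_le_W2:
  assumes P: "real_distribution P" and Q: "real_distribution Q" and fin: "W2sq P Q < top"
    and fm[measurable]: "f \<in> borel_measurable borel" and fb: "\<And>t. \<bar>f t\<bar> \<le> 1"
    and lip: "\<And>s t. \<bar>f s - f t\<bar> \<le> L * \<bar>s - t\<bar>" and L: "0 \<le> L"
  shows "l * ((\<integral> t. f t \<partial>P) - (\<integral> t. f t \<partial>Q)) - l\<^sup>2 * L\<^sup>2 / 4 \<le> (W2 P Q)\<^sup>2"
proof (rule field_le_epsilon)
  fix d :: real assume d: "0 < d"
  obtain \<pi> where \<pi>: "\<pi> \<in> couplings P Q"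
    and cost: "(\<integral>\<^sup>+ p. ennreal ((fst p - snd p)\<^sup>2) \<partial>\<pi>) < W2sq P Q + ennreal d"
    using W2sq_approx[OF fin d] by auto
  interpret prob_space \<pi> using \<pi> by (auto simp: couplings_def)
  have m4: "(\<lambda>p. (fst p - snd p)\<^sup>2) \<in> borel_measurable \<pi>" by (rule coupling_meas[OF \<pi>]) simp
  have cfin: "(\<integral>\<^sup>+ p. ennreal ((fst p - snd p)\<^sup>2) \<partial>\<pi>) < top"
    using cost fin by (auto simp: less_top[symmetric] top_unique)
  have int4: "integrable \<pi> (\<lambda>p. (fst p - snd p)\<^sup>2)"
    by (rule integrableI_nonneg) (use m4 cfin in auto)
  have i1: "integrable \<pi> (\<lambda>p. f (fst p))" and i2: "integrable \<pi> (\<lambda>p. f (snd p))"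
    using coupling_integrable_fst[OF \<pi> fm fb] by auto
  have "l * ((\<integral> t. f t \<partial>P) - (\<integral> t. f t \<partial>Q)) = (\<integral> p. l * (f (fst p) - f (snd p)) \<partial>\<pi>)"
    using coupling_integral_fst[OF \<pi> fm] i1 i2 by simp
  also have "\<dots> \<le> (\<integral> p. ((fst p - snd p)\<^sup>2 + l\<^sup>2 * L\<^sup>2 / 4) \<partial>\<pi>)"
  proof (rule integral_mono)
    show "integrable \<pi> (\<lambda>p. l * (f (fst p) - f (snd p)))" using i1 i2 by auto
    show "integrable \<pi> (\<lambda>p. (fst p - snd p)\<^sup>2 + l\<^sup>2 * L\<^sup>2 / 4)" using int4 by auto
    fix p :: "real \<times> real"
    have "l * (f (fst p) - f (snd p)) \<le> \<bar>l\<bar> * \<bar>f (fst p) - f (snd p)\<bar>"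
      by (metis abs_ge_self abs_mult)
    also have "\<dots> \<le> \<bar>l\<bar> * (L * \<bar>fst p - snd p\<bar>)" by (intro mult_left_mono lip) auto
    also have "\<dots> \<le> (fst p - snd p)\<^sup>2 + l\<^sup>2 * L\<^sup>2 / 4" using amgm_lip[of l L "fst p - snd p"] by (simp add: mult.assoc)
    finally show "l * (f (fst p) - f (snd p)) \<le> (fst p - snd p)\<^sup>2 + l\<^sup>2 * L\<^sup>2 / 4" .
  qed
  also have "\<dots> = (\<integral> p. (fst p - snd p)\<^sup>2 \<partial>\<pi>) + l\<^sup>2 * L\<^sup>2 / 4"
    using int4 by (simp add: prob_space)
  also have "(\<integral> p. (fst p - snd p)\<^sup>2 \<partial>\<pi>) = enn2real (\<integral>\<^sup>+ p. ennreal ((fst p - snd p)\<^sup>2) \<partial>\<pi>)"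
    by (rule integral_eq_nn_integral) (use m4 in auto)
  also have "\<dots> \<le> enn2real (W2sq P Q + ennreal d)"
    using cost fin by (intro enn2real_mono) (auto simp: less_top[symmetric])
  also have "\<dots> = (W2 P Q)\<^sup>2 + d"
    using fin unfolding W2_def by (cases "W2sq P Q") (auto simp: enn2real_plus d less_imp_le simp flip: ennreal_plus)
  finally show "l * ((\<integral> t. f t \<partial>P) - (\<integral> t. f t \<partial>Q)) - l\<^sup>2 * L\<^sup>2 / 4 \<le> (W2 P Q)\<^sup>2 + d" by simp
qed

lemma ennreal_dom_conv:
  fixes u :: "nat \<Rightarrow> 'a \<Rightarrow> ennreal"
  assumes M: "finite_measure M" and um: "\<And>l. u l \<in> borel_measurable M"
    and ub: "\<And>l x. u l x \<le> ennreal C" and C: "0 \<le> C" and lim: "AE x in M. (\<lambda>l. u l x) \<longlonglongrightarrow> 0"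
  shows "(\<lambda>l. \<integral>\<^sup>+ x. u l x \<partial>M) \<longlonglongrightarrow> 0"
proof -
  interpret finite_measure M by fact
  define v where "v l x = enn2real (u l x)" for l x
  have uv: "u l x = ennreal (v l x)" for l x
    using ub[of l x] unfolding v_def by (cases "u l x") (auto simp: top_unique)
  have vm: "v l \<in> borel_measurable M" for l unfolding v_def using um by measurable
  have v0: "0 \<le> v l x" for l x unfolding v_def by simp
  have vb: "v l x \<le> C" for l x
    using ub[of l x] C unfolding uv by simp
  have "AE x in M. (\<lambda>l. v l x) \<longlonglongrightarrow> 0"
    using lim
  proof eventually_elim
    case (elim x)
    then have "(\<lambda>l. enn2real (u l x)) \<longlonglongrightarrow> enn2real 0"
      by (intro tendsto_enn2real) auto
    then show ?case unfolding v_def by simp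
  qed
  then have "(\<lambda>l. integral\<^sup>L M (v l)) \<longlonglongrightarrow> integral\<^sup>L M (\<lambda>x. 0)"
    by (intro integral_dominated_convergence[where w="\<lambda>x. C"]) (auto simp: vm v0 vb)
  then have "(\<lambda>l. ennreal (integral\<^sup>L M (v l))) \<longlonglongrightarrow> ennreal 0"
    by (intro tendsto_ennrealI) simp
  moreover have "(\<integral>\<^sup>+ x. u l x \<partial>M) = ennreal (integral\<^sup>L M (v l))" for l
    unfolding uv
    by (rule nn_integral_eq_integral) (auto simp: v0 vm vb intro!: integrable_const_bound[where B=C])
  ultimately show ?thesis by simp
qed

lemma weakly_conv_imp_weak_conv_m:
  assumes "\<And>n. real_distribution (Ms n)" "real_distribution M" "weakly_conv Ms M"
  shows "weak_conv_m Ms M"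
proof (rule integral_cts_step_conv_imp_weak_conv[OF assms(1,2)])
  fix x y :: real assume xy: "x < y"
  have "continuous_on UNIV (cts_step x y)"
    by (rule uniformly_continuous_imp_continuous) (rule cts_step_uniformly_continuous[OF xy])
  moreover have "bounded (range (cts_step x y))"
    by (rule boundedI[where B=1]) (auto simp: cts_step_def)
  ultimately show "(\<lambda>n. integral\<^sup>L (Ms n) (cts_step x y)) \<longlonglongrightarrow> integral\<^sup>L M (cts_step x y)"
    using assms(3) unfolding weakly_conv_def by blast
qed

lemma weak_conv_m_imp_weakly_conv:
  assumes "\<And>n. real_distribution (Ms n)" "real_distribution M" "weak_conv_m Ms M"
  shows "weakly_conv Ms M"
  unfolding weakly_conv_def
proof (intro allI impI)
  fix f :: "real \<Rightarrow> real" assume c: "continuous_on UNIV f" and b: "bounded (range f)"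
  from b obtain B where B: "\<And>x. norm (f x) \<le> B" by (auto simp: bounded_iff)
  have "\<And>x. isCont f x" using c by (simp add: continuous_on_eq_continuous_at)
  then show "(\<lambda>n. \<integral> t. f t \<partial>Ms n) \<longlonglongrightarrow> (\<integral> t. f t \<partial>M)"
    using weak_conv_imp_integral_bdd_continuous_conv[OF assms, of f B] B by blast
qed

lemma rat_cts_step_imp_weak_conv_m:
  assumes distr_M_seq: "\<And>n. real_distribution (M_seq n)" and distr_M: "real_distribution M"
  assumes integral_conv: "\<And>x y. x \<in> \<rat> \<Longrightarrow> y \<in> \<rat> \<Longrightarrow> x < y \<Longrightarrow>
     (\<lambda>n. integral\<^sup>L (M_seq n) (cts_step x y)) \<longlonglongrightarrow> integral\<^sup>L M (cts_step x y)"
  shows "weak_conv_m M_seq M"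
  unfolding weak_conv_m_def weak_conv_def
proof (clarsimp)
  interpret real_distribution M by (rule distr_M)
  fix x assume "isCont (cdf M) x"
  hence left_cont: "continuous (at_left x) (cdf M)"
    unfolding continuous_at_split ..
  { fix y :: real assume xy: "x < y"
    obtain q1 where q1: "q1 \<in> \<rat>" "x < q1" "q1 < y" using Rats_dense_in_real[OF xy] by blast
    obtain q2 where q2: "q2 \<in> \<rat>" "q1 < q2" "q2 < y" using Rats_dense_in_real[OF q1(3)] by blast
    have "limsup (\<lambda>n. cdf (M_seq n) x) \<le> limsup (\<lambda>n. integral\<^sup>L (M_seq n) (cts_step q1 q2))"
    proof (intro Limsup_mono always_eventually allI)
      fix n
      have "cdf (M_seq n) x \<le> cdf (M_seq n) q1"
        using q1 by (intro finite_borel_measure.cdf_nondecreasing real_distribution.finite_borel_measure_M distr_M_seq) auto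
      also have "\<dots> \<le> integral\<^sup>L (M_seq n) (cts_step q1 q2)"
        using q2 by (intro real_distribution.cdf_cts_step distr_M_seq)
      finally show "ereal (cdf (M_seq n) x) \<le> ereal (integral\<^sup>L (M_seq n) (cts_step q1 q2))" by simp
    qed
    also have "\<dots> = integral\<^sup>L M (cts_step q1 q2)"
      by (intro lim_imp_Limsup) (auto intro: integral_conv q1 q2)
    also have "\<dots> \<le> cdf M q2"
      using q2 by (simp add: cdf_cts_step)
    also have "\<dots> \<le> ereal (cdf M y)" using q2 by (simp add: cdf_nondecreasing)
    finally have "limsup (\<lambda>n. cdf (M_seq n) x) \<le> cdf M y" .
  } note * = this
  { fix y :: real assume yx: "x > y"
    obtain q1 where q1: "q1 \<in> \<rat>" "y < q1" "q1 < x" using Rats_dense_in_real[OF yx] by blast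
    obtain q2 where q2: "q2 \<in> \<rat>" "q1 < q2" "q2 < x" using Rats_dense_in_real[OF q1(3)] by blast
    have "ereal (cdf M y) \<le> ereal (cdf M q1)" using q1 by (simp add: cdf_nondecreasing)
    also have "\<dots> \<le> ereal (integral\<^sup>L M (cts_step q1 q2))"
      using q2 by (simp add: cdf_cts_step)
    also have "\<dots> = liminf (\<lambda>n. integral\<^sup>L (M_seq n) (cts_step q1 q2))"
      by (intro lim_imp_Liminf[symmetric]) (auto intro: integral_conv q1 q2)
    also have "\<dots> \<le> liminf (\<lambda>n. cdf (M_seq n) x)"
    proof (intro Liminf_mono always_eventually allI)
      fix n
      have "integral\<^sup>L (M_seq n) (cts_step q1 q2) \<le> cdf (M_seq n) q2"
        using q2 by (intro real_distribution.cdf_cts_step distr_M_seq)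
      also have "\<dots> \<le> cdf (M_seq n) x"
        using q2 by (intro finite_borel_measure.cdf_nondecreasing real_distribution.finite_borel_measure_M distr_M_seq) auto
      finally show "ereal (integral\<^sup>L (M_seq n) (cts_step q1 q2)) \<le> ereal (cdf (M_seq n) x)" by simp
    qed
    finally have "liminf (\<lambda>n. cdf (M_seq n) x) \<ge> cdf M y" .
  } note ** = this

  have "limsup (\<lambda>n. cdf (M_seq n) x) \<le> cdf M x"
  proof (rule tendsto_lowerbound)
    show "\<forall>\<^sub>F i in at_right x. limsup (\<lambda>xa. ereal (cdf (M_seq xa) x)) \<le> ereal (cdf M i)"
      by (subst eventually_at_right[of _ "x + 1"]) (auto simp: * intro: exI [of _ "x+1"])
  qed (insert cdf_is_right_cont, auto simp: continuous_within)
  moreover have "cdf M x \<le> liminf (\<lambda>n. cdf (M_seq n) x)"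
  proof (rule tendsto_upperbound)
    show "\<forall>\<^sub>F i in at_left x. ereal (cdf M i) \<le> liminf (\<lambda>xa. ereal (cdf (M_seq xa) x))"
      by (subst eventually_at_left[of "x - 1"]) (auto simp: ** intro: exI [of _ "x-1"])
  qed (insert left_cont, auto simp: continuous_within)
  ultimately show "(\<lambda>n. cdf (M_seq n) x) \<longlonglongrightarrow> cdf M x"
    by (elim limsup_le_liminf_real)
qed

definition rho :: "real \<Rightarrow> real \<Rightarrow> real" where "rho R t = max (t\<^sup>2 - R\<^sup>2) 0"
definition TR :: "real \<Rightarrow> real measure \<Rightarrow> ennreal" where "TR R P = (\<integral>\<^sup>+ t. ennreal (rho R t) \<partial>P)"

lemma rho_measurable[measurable]: "rho R \<in> borel_measurable borel"
  unfolding rho_def by measurable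

lemma rho_nonneg: "0 \<le> rho R t" unfolding rho_def by simp

lemma sq_trunc_ineq:
  assumes R: "0 \<le> R"
  shows "(a - b)\<^sup>2 \<le> min ((a - b)\<^sup>2) (16 * R\<^sup>2) + 6 * rho R a + 6 * rho R b"
proof -
  have h: "(a-b)\<^sup>2 \<le> 2 * a\<^sup>2 + 2 * b\<^sup>2" by (rule sq_diff_le)
  have ra: "a\<^sup>2 - R\<^sup>2 \<le> rho R a" "0 \<le> rho R a" and rb: "b\<^sup>2 - R\<^sup>2 \<le> rho R b" "0 \<le> rho R b"
    unfolding rho_def by auto
  show ?thesis
  proof (cases "(a - b)\<^sup>2 \<le> 16 * R\<^sup>2")
    case True
    then show ?thesis using ra rb by (simp add: min_def)
  next
    case False
    then have m: "min ((a - b)\<^sup>2) (16 * R\<^sup>2) = 16 * R\<^sup>2" by (simp add: min_def)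
    have R2: "0 \<le> R\<^sup>2" by simp
    have "4 * R\<^sup>2 < a\<^sup>2 \<or> 4 * R\<^sup>2 < b\<^sup>2" using False h by linarith
    then show ?thesis
    proof
      assume a: "4 * R\<^sup>2 < a\<^sup>2"
      show ?thesis
      proof (cases "b\<^sup>2 \<le> a\<^sup>2")
        case True then show ?thesis using h ra rb a R2 m by linarith
      next
        case False then show ?thesis using h ra rb a R2 m by linarith
      qed
    next
      assume b: "4 * R\<^sup>2 < b\<^sup>2"
      show ?thesis
      proof (cases "a\<^sup>2 \<le> b\<^sup>2")
        case True then show ?thesis using h ra rb b R2 m by linarith
      next
        case False then show ?thesis using h ra rb b R2 m by linarith
      qed
    qed
  qed
qed

lemma ennreal_abc:
  assumes "0 \<le> a" "0 \<le> b" "0 \<le> c"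
  shows "ennreal (a + 6 * b + 6 * c) = ennreal a + 6 * ennreal b + 6 * ennreal c"
proof -
  have "ennreal (a + 6 * b + 6 * c) = ennreal (a + 6 * b) + ennreal (6 * c)"
    by (rule ennreal_plus) (use assms in auto)
  also have "ennreal (a + 6 * b) = ennreal a + ennreal (6 * b)"
    by (rule ennreal_plus) (use assms in auto)
  also have "ennreal (6 * b) = 6 * ennreal b" using assms by (simp add: ennreal_mult)
  also have "ennreal (6 * c) = 6 * ennreal c" using assms by (simp add: ennreal_mult)
  finally show ?thesis .
qed

lemma skorohod_bound:
  assumes Ms: "\<And>l. real_distribution (Ms l)" and M: "real_distribution M" and wc: "weak_conv_m Ms M"
    and R: "0 \<le> R"
  shows "\<exists>f. f \<longlonglongrightarrow> 0 \<and> (\<forall>l. f l \<le> ennreal (16 * R\<^sup>2)) \<and>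
           (\<forall>l. W2sq (Ms l) M \<le> f l + 6 * TR R (Ms l) + 6 * TR R M)"
proof -
  obtain \<Omega> :: "real measure" and Y_seq Y where
    ps: "prob_space \<Omega>" and Ym[measurable]: "\<And>n. Y_seq n \<in> borel_measurable \<Omega>" and
    dY: "\<And>n. distr \<Omega> borel (Y_seq n) = Ms n" and
    Ym0: "Y \<in> measurable \<Omega> lborel" and
    dY': "distr \<Omega> borel Y = M" and
    conv: "\<And>x. x \<in> space \<Omega> \<Longrightarrow> (\<lambda>n. Y_seq n x) \<longlonglongrightarrow> Y x"
    using Skorohod[OF Ms M wc] by blast
  have Ym'[measurable]: "Y \<in> borel_measurable \<Omega>" using Ym0 by simp
  interpret prob_space \<Omega> by (rule ps)
  define f where "f l = (\<integral>\<^sup>+ \<omega>. ennreal (min ((Y_seq l \<omega> - Y \<omega>)\<^sup>2) (16 * R\<^sup>2)) \<partial>\<Omega>)" for l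
  have f0: "f \<longlonglongrightarrow> 0"
    unfolding f_def
  proof (rule ennreal_dom_conv[where C="16 * R\<^sup>2"])
    show "finite_measure \<Omega>" by (rule finite_measure_axioms)
    show "AE x in \<Omega>. (\<lambda>l. ennreal (min ((Y_seq l x - Y x)\<^sup>2) (16 * R\<^sup>2))) \<longlonglongrightarrow> 0"
    proof (rule AE_I2)
      fix x assume x: "x \<in> space \<Omega>"
      have "(\<lambda>l. min ((Y_seq l x - Y x)\<^sup>2) (16 * R\<^sup>2)) \<longlonglongrightarrow> min ((Y x - Y x)\<^sup>2) (16 * R\<^sup>2)"
        by (intro tendsto_intros conv x)
      then have "(\<lambda>l. ennreal (min ((Y_seq l x - Y x)\<^sup>2) (16 * R\<^sup>2))) \<longlonglongrightarrow> ennreal (min ((Y x - Y x)\<^sup>2) (16 * R\<^sup>2))"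
        by (rule tendsto_ennrealI)
      then show "(\<lambda>l. ennreal (min ((Y_seq l x - Y x)\<^sup>2) (16 * R\<^sup>2))) \<longlonglongrightarrow> 0"
        using R by simp
    qed
  qed (auto simp: R)
  have fb: "f l \<le> ennreal (16 * R\<^sup>2)" for l
  proof -
    have "f l \<le> (\<integral>\<^sup>+ \<omega>. ennreal (16 * R\<^sup>2) \<partial>\<Omega>)"
      unfolding f_def by (intro nn_integral_mono) auto
    also have "\<dots> = ennreal (16 * R\<^sup>2)" by (simp add: emeasure_space_1)
    finally show ?thesis .
  qed
  have TRd: "TR R (Ms l) = (\<integral>\<^sup>+ \<omega>. ennreal (rho R (Y_seq l \<omega>)) \<partial>\<Omega>)" for l
    unfolding TR_def dY[symmetric, of l] by (rule nn_integral_distr) auto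
  have TRd': "TR R M = (\<integral>\<^sup>+ \<omega>. ennreal (rho R (Y \<omega>)) \<partial>\<Omega>)"
    unfolding TR_def dY'[symmetric] by (rule nn_integral_distr) auto
  have W: "W2sq (Ms l) M \<le> f l + 6 * TR R (Ms l) + 6 * TR R M" for l
  proof -
    define \<pi> where "\<pi> = distr \<Omega> (borel \<Otimes>\<^sub>M borel) (\<lambda>\<omega>. (Y_seq l \<omega>, Y \<omega>))"
    have pm: "(\<lambda>\<omega>. (Y_seq l \<omega>, Y \<omega>)) \<in> measurable \<Omega> (borel \<Otimes>\<^sub>M borel)" by measurable
    have c: "\<pi> \<in> couplings (Ms l) M"
      unfolding couplings_def
    proof (intro CollectI conjI)
      show "sets \<pi> = sets (borel \<Otimes>\<^sub>M borel)" unfolding \<pi>_def by simp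
      show "prob_space \<pi>" unfolding \<pi>_def by (rule prob_space_distr[OF pm])
      show "distr \<pi> borel fst = Ms l"
        unfolding \<pi>_def dY[symmetric, of l] by (subst distr_distr) (auto simp: comp_def pm)
      show "distr \<pi> borel snd = M"
        unfolding \<pi>_def dY'[symmetric] by (subst distr_distr) (auto simp: comp_def pm)
    qed
    have "W2sq (Ms l) M \<le> (\<integral>\<^sup>+ p. ennreal ((fst p - snd p)\<^sup>2) \<partial>\<pi>)" by (rule W2sq_le_cost[OF c])
    also have "\<dots> = (\<integral>\<^sup>+ \<omega>. ennreal ((Y_seq l \<omega> - Y \<omega>)\<^sup>2) \<partial>\<Omega>)"
      unfolding \<pi>_def by (subst nn_integral_distr[OF pm]) auto
    also have "\<dots> \<le> (\<integral>\<^sup>+ \<omega>. (ennreal (min ((Y_seq l \<omega> - Y \<omega>)\<^sup>2) (16 * R\<^sup>2)) +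
                 6 * ennreal (rho R (Y_seq l \<omega>))) + 6 * ennreal (rho R (Y \<omega>)) \<partial>\<Omega>)"
    proof (rule nn_integral_mono)
      fix \<omega>
      have "ennreal ((Y_seq l \<omega> - Y \<omega>)\<^sup>2) \<le> ennreal (min ((Y_seq l \<omega> - Y \<omega>)\<^sup>2) (16 * R\<^sup>2) + 6 * rho R (Y_seq l \<omega>) + 6 * rho R (Y \<omega>))"
        by (rule ennreal_leI) (rule sq_trunc_ineq[OF R])
      also have "\<dots> = (ennreal (min ((Y_seq l \<omega> - Y \<omega>)\<^sup>2) (16 * R\<^sup>2)) +
                 6 * ennreal (rho R (Y_seq l \<omega>))) + 6 * ennreal (rho R (Y \<omega>))"
        by (rule ennreal_abc) (auto simp: rho_nonneg)
      finally show "ennreal ((Y_seq l \<omega> - Y \<omega>)\<^sup>2) \<le> (ennreal (min ((Y_seq l \<omega> - Y \<omega>)\<^sup>2) (16 * R\<^sup>2)) +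
                 6 * ennreal (rho R (Y_seq l \<omega>))) + 6 * ennreal (rho R (Y \<omega>))" .
    qed
    also have "\<dots> = f l + 6 * TR R (Ms l) + 6 * TR R M"
      unfolding f_def TRd TRd'
      by (simp add: nn_integral_add nn_integral_cmult)
    finally show ?thesis .
  qed
  show ?thesis using f0 fb W by blast
qed

lemma space_torus: "space torus = torus_set"
  by (simp add: torus_def space_restrict_space)

lemma disint_meas: "disintegration \<mu> K \<Longrightarrow> K \<in> measurable torus (subprob_algebra borel)"
  unfolding disintegration_def by (auto intro: measurable_prob_algebraD)

lemma disint_rd:
  assumes D: "disintegration \<mu> K" and x: "x \<in> space torus" shows "real_distribution (K x)"
proof -
  have "K x \<in> space (prob_algebra borel)"
    using D x unfolding disintegration_def by (auto intro: measurable_space)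
  then show ?thesis by (auto simp: space_prob_algebra real_distribution_def real_distribution_axioms_def)
qed

lemma sect_meas:
  assumes "u \<in> borel_measurable (torus \<Otimes>\<^sub>M borel)" "x \<in> space torus" "sets N = sets borel"
  shows "(\<lambda>\<theta>. u (x, \<theta>)) \<in> borel_measurable N"
proof -
  have "(\<lambda>\<theta>. u (x, \<theta>)) \<in> borel_measurable borel"
    using measurable_comp[OF measurable_Pair1'[OF assms(2), of borel] assms(1)] by (simp add: comp_def)
  then show ?thesis using measurable_cong_sets[of N borel borel borel] assms(3) by simp
qed

lemma inner_meas:
  assumes "disintegration \<mu> K" "u \<in> borel_measurable (torus \<Otimes>\<^sub>M borel)"
  shows "(\<lambda>x. \<integral>\<^sup>+ \<theta>. u (x, \<theta>) \<partial>K x) \<in> borel_measurable torus"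
  using nn_integral_measurable_subprob_algebra2[of "\<lambda>x y. u (x, y)" torus borel K] disint_meas[OF assms(1)] assms(2)
  by simp

lemma disint_nn_integral:
  fixes \<mu> :: "((real^'d) \<times> real) measure" and K :: "real^'d \<Rightarrow> real measure"
  assumes s: "sets \<mu> = sets (torus \<Otimes>\<^sub>M borel)" and D: "disintegration \<mu> K"
    and g: "g \<in> borel_measurable (torus \<Otimes>\<^sub>M borel)"
  shows "(\<integral>\<^sup>+ z. g z \<partial>\<mu>) = (\<integral>\<^sup>+ x. (\<integral>\<^sup>+ \<theta>. g (x, \<theta>) \<partial>K x) \<partial>torus)"
  using g
proof (induction rule: borel_measurable_induct)
  case (cong f g)
  have sp: "space \<mu> = space (torus \<Otimes>\<^sub>M borel)" using sets_eq_imp_space_eq[OF s] .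
  have "(\<integral>\<^sup>+ z. f z \<partial>\<mu>) = (\<integral>\<^sup>+ z. g z \<partial>\<mu>)"
    using cong(3) sp by (intro nn_integral_cong) auto
  moreover have "(\<integral>\<^sup>+ x. (\<integral>\<^sup>+ \<theta>. f (x, \<theta>) \<partial>K x) \<partial>torus) = (\<integral>\<^sup>+ x. (\<integral>\<^sup>+ \<theta>. g (x, \<theta>) \<partial>K x) \<partial>torus)"
  proof (rule nn_integral_cong)
    fix x :: "real^'d" assume x: "x \<in> space torus"
    show "(\<integral>\<^sup>+ \<theta>. f (x, \<theta>) \<partial>K x) = (\<integral>\<^sup>+ \<theta>. g (x, \<theta>) \<partial>K x)"
      using cong(3) x by (intro nn_integral_cong) (auto simp: space_pair_measure)
  qed
  ultimately show ?case using cong(4) by simp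
next
  case (set A)
  have "(\<integral>\<^sup>+ z. indicator A z \<partial>\<mu>) = emeasure \<mu> A" using set s by simp
  also have "\<dots> = (\<integral>\<^sup>+ x. emeasure (K x) (Pair x -` A) \<partial>torus)"
    using D set s unfolding disintegration_def by auto
  also have "\<dots> = (\<integral>\<^sup>+ x. (\<integral>\<^sup>+ \<theta>. indicator A (x, \<theta>) \<partial>K x) \<partial>torus)"
  proof (rule nn_integral_cong)
    fix x :: "real^'d" assume x: "x \<in> space torus"
    interpret real_distribution "K x" by (rule disint_rd[OF D x])
    have "Pair x -` A \<in> sets (K x)" using set by simp
    then show "emeasure (K x) (Pair x -` A) = (\<integral>\<^sup>+ \<theta>. indicator A (x, \<theta>) \<partial>K x)"
    proof -
      have "(\<lambda>\<theta>. indicator A (x, \<theta>) :: ennreal) = indicator (Pair x -` A)"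
        by (auto simp: indicator_def fun_eq_iff)
      then show ?thesis using \<open>Pair x -` A \<in> sets (K x)\<close> by simp
    qed
  qed
  finally show ?case .
next
  case (mult u c)
  have um: "u \<in> borel_measurable \<mu>" using mult(2) by (simp add: measurable_cong_sets[OF s refl])
  have "(\<integral>\<^sup>+ z. c * u z \<partial>\<mu>) = c * (\<integral>\<^sup>+ z. u z \<partial>\<mu>)" by (rule nn_integral_cmult[OF um])
  also have "\<dots> = c * (\<integral>\<^sup>+ x. (\<integral>\<^sup>+ \<theta>. u (x, \<theta>) \<partial>K x) \<partial>torus)" using mult(4) by simp
  also have "\<dots> = (\<integral>\<^sup>+ x. c * (\<integral>\<^sup>+ \<theta>. u (x, \<theta>) \<partial>K x) \<partial>torus)"
    by (rule nn_integral_cmult[symmetric]) (rule inner_meas[OF D mult(2)])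
  also have "\<dots> = (\<integral>\<^sup>+ x. (\<integral>\<^sup>+ \<theta>. c * u (x, \<theta>) \<partial>K x) \<partial>torus)"
  proof (rule nn_integral_cong)
    fix x :: "real^'d" assume x: "x \<in> space torus"
    interpret real_distribution "K x" by (rule disint_rd[OF D x])
    show "c * (\<integral>\<^sup>+ \<theta>. u (x, \<theta>) \<partial>K x) = (\<integral>\<^sup>+ \<theta>. c * u (x, \<theta>) \<partial>K x)"
      by (rule nn_integral_cmult[symmetric]) (rule sect_meas[OF mult(2) x]; simp)
  qed
  finally show ?case .
next
  case (add u v)
  have um: "u \<in> borel_measurable \<mu>" using \<open>u \<in> borel_measurable (torus \<Otimes>\<^sub>M borel)\<close> by (simp add: measurable_cong_sets[OF s refl])
  have vm: "v \<in> borel_measurable \<mu>" using \<open>v \<in> borel_measurable (torus \<Otimes>\<^sub>M borel)\<close> by (simp add: measurable_cong_sets[OF s refl])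
  have "(\<integral>\<^sup>+ z. v z + u z \<partial>\<mu>) = (\<integral>\<^sup>+ z. v z \<partial>\<mu>) + (\<integral>\<^sup>+ z. u z \<partial>\<mu>)"
    by (rule nn_integral_add[OF vm um])
  also have "\<dots> = (\<integral>\<^sup>+ x. (\<integral>\<^sup>+ \<theta>. v (x, \<theta>) \<partial>K x) \<partial>torus) + (\<integral>\<^sup>+ x. (\<integral>\<^sup>+ \<theta>. u (x, \<theta>) \<partial>K x) \<partial>torus)"
    using add.IH by simp
  also have "\<dots> = (\<integral>\<^sup>+ x. (\<integral>\<^sup>+ \<theta>. v (x, \<theta>) \<partial>K x) + (\<integral>\<^sup>+ \<theta>. u (x, \<theta>) \<partial>K x) \<partial>torus)"
    by (rule nn_integral_add[symmetric]) (auto intro: inner_meas[OF D] add.hyps)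
  also have "\<dots> = (\<integral>\<^sup>+ x. (\<integral>\<^sup>+ \<theta>. v (x, \<theta>) + u (x, \<theta>) \<partial>K x) \<partial>torus)"
  proof (rule nn_integral_cong)
    fix x :: "real^'d" assume x: "x \<in> space torus"
    interpret real_distribution "K x" by (rule disint_rd[OF D x])
    show "(\<integral>\<^sup>+ \<theta>. v (x, \<theta>) \<partial>K x) + (\<integral>\<^sup>+ \<theta>. u (x, \<theta>) \<partial>K x) = (\<integral>\<^sup>+ \<theta>. v (x, \<theta>) + u (x, \<theta>) \<partial>K x)"
      by (rule nn_integral_add[symmetric]) (rule sect_meas[OF _ x]; (simp add: add.hyps)?)+
  qed
  finally show ?case .
next
  case (seq U)
  have Um: "U i \<in> borel_measurable \<mu>" for i using seq(1) by (simp add: measurable_cong_sets[OF s refl])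
  have "(\<integral>\<^sup>+ z. (SUP i. U i) z \<partial>\<mu>) = (\<integral>\<^sup>+ z. (SUP i. U i z) \<partial>\<mu>)" by (simp add: image_comp)
  also have "\<dots> = (SUP i. \<integral>\<^sup>+ z. U i z \<partial>\<mu>)"
    by (rule nn_integral_monotone_convergence_SUP) (use \<open>incseq U\<close> Um in auto)
  also have "\<dots> = (SUP i. \<integral>\<^sup>+ x. (\<integral>\<^sup>+ \<theta>. U i (x, \<theta>) \<partial>K x) \<partial>torus)" using seq.IH by simp
  also have "\<dots> = (\<integral>\<^sup>+ x. (SUP i. \<integral>\<^sup>+ \<theta>. U i (x, \<theta>) \<partial>K x) \<partial>torus)"
  proof (rule nn_integral_monotone_convergence_SUP[symmetric])
    show "incseq (\<lambda>i x. \<integral>\<^sup>+ \<theta>. U i (x, \<theta>) \<partial>K x)"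
      using \<open>incseq U\<close> by (auto simp: incseq_def le_fun_def intro!: nn_integral_mono)
    show "(\<lambda>x. \<integral>\<^sup>+ \<theta>. U i (x, \<theta>) \<partial>K x) \<in> borel_measurable torus" for i
      by (rule inner_meas[OF D seq(1)])
  qed
  also have "\<dots> = (\<integral>\<^sup>+ x. (\<integral>\<^sup>+ \<theta>. (SUP i. U i) (x, \<theta>) \<partial>K x) \<partial>torus)"
  proof (rule nn_integral_cong)
    fix x :: "real^'d" assume x: "x \<in> space torus"
    interpret real_distribution "K x" by (rule disint_rd[OF D x])
    have "(\<integral>\<^sup>+ \<theta>. (SUP i. U i (x, \<theta>)) \<partial>K x) = (SUP i. \<integral>\<^sup>+ \<theta>. U i (x, \<theta>) \<partial>K x)"
    proof (rule nn_integral_monotone_convergence_SUP)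
      show "incseq (\<lambda>i \<theta>. U i (x, \<theta>))" using \<open>incseq U\<close> by (auto simp: incseq_def le_fun_def)
      show "(\<lambda>\<theta>. U i (x, \<theta>)) \<in> borel_measurable (K x)" for i by (rule sect_meas[OF seq(1) x]) simp
    qed
    then show "(SUP i. \<integral>\<^sup>+ \<theta>. U i (x, \<theta>) \<partial>K x) = (\<integral>\<^sup>+ \<theta>. (SUP i. U i) (x, \<theta>) \<partial>K x)"
      by (simp add: image_comp)
  qed
  finally show ?case .
qed

lemma lower_approx:
  assumes fin: "(\<integral>\<^sup>+ x. f x \<partial>M) < top" and e: "0 < e"
  shows "\<exists>g\<in>borel_measurable M. (\<forall>x. g x \<le> f x) \<and> (\<integral>\<^sup>+ x. f x \<partial>M) \<le> (\<integral>\<^sup>+ x. g x \<partial>M) + ennreal e"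
proof (cases "(\<integral>\<^sup>+ x. f x \<partial>M) \<le> ennreal e")
  case True
  then show ?thesis by (intro bexI[of _ "\<lambda>x. 0"]) auto
next
  case False
  obtain r where r: "(\<integral>\<^sup>+ x. f x \<partial>M) = ennreal r" "0 \<le> r" using fin by (cases "(\<integral>\<^sup>+ x. f x \<partial>M)") auto
  have re: "e < r" using False r e by (auto simp: not_le ennreal_less_iff)
  have "ennreal (r - e) < (\<integral>\<^sup>+ x. f x \<partial>M)" using r re e by (auto simp: ennreal_less_iff)
  then obtain g where g: "simple_function M g" "g \<le> f" and lt: "ennreal (r - e) < integral\<^sup>S M g"
    unfolding nn_integral_def less_SUP_iff by blast
  have gm: "g \<in> borel_measurable M" using g(1) by (rule borel_measurable_simple_function)
  have "ennreal (r - e) < (\<integral>\<^sup>+ x. g x \<partial>M)" using lt nn_integral_eq_simple_integral[OF g(1)] by simp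
  then have "ennreal (r - e) + ennreal e \<le> (\<integral>\<^sup>+ x. g x \<partial>M) + ennreal e" by (intro add_right_mono) simp
  moreover have "ennreal (r - e) + ennreal e = ennreal r" using re e by (simp add: ennreal_plus[symmetric] del: ennreal_plus)
  ultimately show ?thesis using gm g(2) r by (auto simp: le_fun_def)
qed

lemma fast_subseq:
  fixes a :: "nat \<Rightarrow> real"
  assumes "a \<longlonglongrightarrow> 0"
  shows "\<exists>s. strict_mono s \<and> (\<forall>l. \<bar>a (s l)\<bar> < (1/4)^l)"
proof -
  have "\<forall>l. \<exists>N. \<forall>n\<ge>N. \<bar>a n\<bar> < (1/4)^l"
  proof
    fix l :: nat
    have "(0::real) < (1/4)^l" by simp
    from LIMSEQ_D[OF assms this] show "\<exists>N. \<forall>n\<ge>N. \<bar>a n\<bar> < (1/4)^l" by auto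
  qed
  then obtain N where N: "\<And>l n. n \<ge> N l \<Longrightarrow> \<bar>a n\<bar> < (1/4)^l" by metis
  define s where "s l = l + (\<Sum>i\<le>l. N i)" for l
  have "strict_mono s" unfolding strict_mono_Suc_iff s_def by simp
  moreover have "s l \<ge> N l" for l
  proof -
    have "N l \<le> (\<Sum>i\<le>l. N i)" by (rule member_le_sum) auto
    then show ?thesis unfolding s_def by simp
  qed
  ultimately show ?thesis using N by blast
qed

lemma not_tendsto_subseq:
  fixes a :: "nat \<Rightarrow> real"
  assumes "\<not> a \<longlonglongrightarrow> 0"
  shows "\<exists>e>0. \<exists>r::nat\<Rightarrow>nat. strict_mono r \<and> (\<forall>n. e \<le> \<bar>a (r n)\<bar>)"
proof -
  from assms obtain e where e: "0 < e" and fr: "\<forall>N. \<exists>n\<ge>N. e \<le> \<bar>a n\<bar>"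
    unfolding LIMSEQ_iff by (auto simp: not_less)
  define S where "S = {n. e \<le> \<bar>a n\<bar>}"
  have inf: "infinite S" unfolding S_def infinite_nat_iff_unbounded_le using fr by auto
  obtain r :: "nat \<Rightarrow> nat" where r: "strict_mono r" "\<And>n. r n \<in> S"
    using infinite_enumerate[OF inf] by blast
  have "\<forall>n. e \<le> \<bar>a (r n)\<bar>" using r(2) unfolding S_def by simp
  then show ?thesis using e r(1) by blast
qed

lemma summable_ae_zero:
  fixes h :: "nat \<Rightarrow> 'a \<Rightarrow> real"
  assumes hm: "\<And>l. h l \<in> borel_measurable M" and h0: "\<And>l x. 0 \<le> h l x"
    and b: "\<And>l. (\<integral>\<^sup>+ x. ennreal (h l x) \<partial>M) \<le> ennreal (C * (1/2)^l)" and C: "0 \<le> C"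
  shows "AE x in M. (\<lambda>l. h l x) \<longlonglongrightarrow> 0"
proof -
  have "(\<integral>\<^sup>+ x. (\<Sum>l. ennreal (h l x)) \<partial>M) = (\<Sum>l. \<integral>\<^sup>+ x. ennreal (h l x) \<partial>M)"
    by (rule nn_integral_suminf) (use hm in auto)
  also have "\<dots> \<le> (\<Sum>l. ennreal (C * (1/2)^l))" by (intro suminf_le b) auto
  also have "\<dots> = ennreal (\<Sum>l. C * (1/2)^l)"
    using C by (intro suminf_ennreal2) (auto intro!: summable_mult summable_geometric)
  finally have "(\<integral>\<^sup>+ x. (\<Sum>l. ennreal (h l x)) \<partial>M) \<noteq> \<infinity>" by (auto simp: top_unique)
  then have "AE x in M. (\<Sum>l. ennreal (h l x)) \<noteq> \<infinity>"
    by (intro nn_integral_PInf_AE) (use hm in auto)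
  then show ?thesis
  proof eventually_elim
    case (elim x)
    then have "summable (\<lambda>l. h l x)" by (intro summable_suminf_not_top) (auto simp: h0)
    then show ?case by (rule summable_LIMSEQ_zero)
  qed
qed

lemma ennreal_tendsto_zeroI:
  fixes f :: "nat \<Rightarrow> ennreal"
  assumes "\<And>e. 0 < e \<Longrightarrow> eventually (\<lambda>l. f l \<le> ennreal e) sequentially"
  shows "f \<longlonglongrightarrow> 0"
proof (rule order_tendstoI)
  fix a :: ennreal assume a: "0 < a"
  obtain b where b: "0 < b" "b < a" using dense[OF a] by blast
  then obtain e where e: "b = ennreal e" "0 < e" by (cases b) (auto simp: top_unique)
  show "eventually (\<lambda>l. f l < a) sequentially"
    using assms[OF e(2)] by eventually_elim (use b e in auto)
qed (simp add: not_less[symmetric])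

lemma ennreal_le_minus_add: "(a::ennreal) \<le> (a - b) + b"
  by (cases "b \<le> a") (auto simp: diff_add_self_ennreal not_le intro: less_imp_le order.trans[OF _ add_increasing])

lemma P2L_sets: "\<mu> \<in> P2L \<Longrightarrow> sets \<mu> = sets (torus \<Otimes>\<^sub>M borel)"
  by (simp add: P2L_def M1L_def)

lemma P2L_prob: "\<mu> \<in> P2L \<Longrightarrow> prob_space \<mu>"
  by (simp add: P2L_def M1L_def)

lemma P2L_fin: "\<mu> \<in> P2L \<Longrightarrow> (\<integral>\<^sup>+ z. ennreal ((snd z)\<^sup>2) \<partial>\<mu>) < \<infinity>"
  by (simp add: P2L_def)

lemma prob_torus:
  fixes \<mu> :: "((real^'d) \<times> real) measure"
  assumes "\<mu> \<in> P2L" shows "prob_space (torus :: (real^'d) measure)"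
proof -
  have s: "sets \<mu> = sets (torus \<Otimes>\<^sub>M borel)" and p: "prob_space \<mu>" and d: "distr \<mu> torus fst = torus"
    using assms by (auto simp: P2L_def M1L_def)
  have "fst \<in> measurable \<mu> torus" by (simp add: measurable_cong_sets[OF s refl])
  then have "prob_space (distr \<mu> torus fst)" by (rule prob_space.prob_space_distr[OF p])
  then show ?thesis using d by simp
qed

lemma P2L_meas:
  assumes "\<mu> \<in> P2L" "f \<in> borel_measurable (torus \<Otimes>\<^sub>M borel)"
  shows "f \<in> borel_measurable \<mu>"
  using assms(2) by (simp add: measurable_cong_sets[OF P2L_sets[OF assms(1)] refl])

lemma m2_disint:
  fixes \<mu> :: "((real^'d) \<times> real) measure" and K :: "real^'d \<Rightarrow> real measure"
  assumes "\<mu> \<in> P2L" "disintegration \<mu> K"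
  shows "(\<integral>\<^sup>+ z. ennreal ((snd z)\<^sup>2) \<partial>\<mu>) = (\<integral>\<^sup>+ x. m2 (K x) \<partial>torus)"
  unfolding m2_def using disint_nn_integral[OF P2L_sets[OF assms(1)] assms(2), of "\<lambda>z. ennreal ((snd z)\<^sup>2)"]
  by simp

lemma m2_meas:
  fixes K :: "real^'d \<Rightarrow> real measure"
  assumes "disintegration \<mu> K"
  shows "(\<lambda>x. m2 (K x)) \<in> borel_measurable torus"
  unfolding m2_def using inner_meas[OF assms, of "\<lambda>z. ennreal ((snd z)\<^sup>2)"] by simp

lemma TR_disint:
  fixes \<mu> :: "((real^'d) \<times> real) measure" and K :: "real^'d \<Rightarrow> real measure"
  assumes "\<mu> \<in> P2L" "disintegration \<mu> K"
  shows "(\<integral>\<^sup>+ z. ennreal (rho R (snd z)) \<partial>\<mu>) = (\<integral>\<^sup>+ x. TR R (K x) \<partial>torus)"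
  unfolding TR_def using disint_nn_integral[OF P2L_sets[OF assms(1)] assms(2), of "\<lambda>z. ennreal (rho R (snd z))"]
  by simp

lemma TR_meas:
  fixes K :: "real^'d \<Rightarrow> real measure"
  assumes "disintegration \<mu> K"
  shows "(\<lambda>x. TR R (K x)) \<in> borel_measurable torus"
  unfolding TR_def using inner_meas[OF assms, of "\<lambda>z. ennreal (rho R (snd z))"] by simp

lemma m2_int_fin:
  fixes \<mu> :: "((real^'d) \<times> real) measure" and K :: "real^'d \<Rightarrow> real measure"
  assumes "\<mu> \<in> P2L" "disintegration \<mu> K"
  shows "(\<integral>\<^sup>+ x. m2 (K x) \<partial>torus) < \<infinity>"
proof -
  have "(\<integral>\<^sup>+ x. m2 (K x) \<partial>torus) = (\<integral>\<^sup>+ z. ennreal ((snd z)\<^sup>2) \<partial>\<mu>)"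
    by (rule m2_disint[OF assms, symmetric])
  also have "\<dots> < \<infinity>" using P2L_fin[OF assms(1)] by (simp add: infinity_ennreal_def)
  finally show ?thesis .
qed

lemma m2_ae_fin:
  fixes \<mu> :: "((real^'d) \<times> real) measure" and K :: "real^'d \<Rightarrow> real measure"
  assumes "\<mu> \<in> P2L" "disintegration \<mu> K"
  shows "AE x in torus. m2 (K x) < \<infinity>"
proof -
  have "AE x in torus. m2 (K x) \<noteq> \<infinity>"
    by (rule nn_integral_PInf_AE[OF m2_meas[OF assms(2)]]) (use m2_int_fin[OF assms] in auto)
  then show ?thesis by (simp add: less_top)
qed

lemma sq_integral_eq:
  fixes \<mu> :: "((real^'d) \<times> real) measure" and K :: "real^'d \<Rightarrow> real measure"
  assumes "\<mu> \<in> P2L" "disintegration \<mu> K"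
  shows "(\<integral> z. (snd z)\<^sup>2 \<partial>\<mu>) = enn2real (\<integral>\<^sup>+ x. m2 (K x) \<partial>torus)"
proof -
  have "(\<integral> z. (snd z)\<^sup>2 \<partial>\<mu>) = enn2real (\<integral>\<^sup>+ z. ennreal ((snd z)\<^sup>2) \<partial>\<mu>)"
  proof -
    have "(\<lambda>z. (snd z)\<^sup>2) \<in> borel_measurable \<mu>" by (rule P2L_meas[OF assms(1)]) measurable
    then show ?thesis by (rule integral_eq_nn_integral) simp
  qed
  then show ?thesis using m2_disint[OF assms] by simp
qed

lemma integrable_sq:
  assumes "\<mu> \<in> P2L"
  shows "integrable \<mu> (\<lambda>z. (snd z)\<^sup>2)"
proof -
  have "(\<lambda>z. (snd z)\<^sup>2) \<in> borel_measurable \<mu>" by (rule P2L_meas[OF assms]) measurable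
  moreover have "(\<integral>\<^sup>+ z. ennreal ((snd z)\<^sup>2) \<partial>\<mu>) < \<infinity>" by (rule P2L_fin[OF assms])
  ultimately show ?thesis by (intro integrableI_nonneg) auto
qed

lemma inner_integral_eq:
  fixes K :: "real^'d \<Rightarrow> real measure" and h :: "real \<Rightarrow> real"
  assumes D: "disintegration \<mu> K" and hm[measurable]: "h \<in> borel_measurable borel"
    and h0: "\<And>t. 0 \<le> h t" and hb: "\<And>t. h t \<le> B" and x: "x \<in> space torus"
  shows "(\<integral> t. h t \<partial>K x) = enn2real (\<integral>\<^sup>+ t. ennreal (h t) \<partial>K x)"
    "(\<integral>\<^sup>+ t. ennreal (h t) \<partial>K x) = ennreal (\<integral> t. h t \<partial>K x)"
proof -
  interpret real_distribution "K x" by (rule disint_rd[OF D x])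
  have "integrable (K x) h" by (rule integrable_const_bound[where B=B]) (use h0 hb in auto)
  then show "(\<integral>\<^sup>+ t. ennreal (h t) \<partial>K x) = ennreal (\<integral> t. h t \<partial>K x)"
    by (rule nn_integral_eq_integral) (simp add: h0)
  then show "(\<integral> t. h t \<partial>K x) = enn2real (\<integral>\<^sup>+ t. ennreal (h t) \<partial>K x)"
    by (simp add: integral_nonneg h0)
qed

lemma inner_integral_meas:
  fixes K :: "real^'d \<Rightarrow> real measure" and h :: "real \<Rightarrow> real"
  assumes D: "disintegration \<mu> K" and hm[measurable]: "h \<in> borel_measurable borel"
    and h0: "\<And>t. 0 \<le> h t" and hb: "\<And>t. h t \<le> B"
  shows "(\<lambda>x. \<integral> t. h t \<partial>K x) \<in> borel_measurable torus"
proof -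
  have "(\<lambda>x. enn2real (\<integral>\<^sup>+ t. ennreal (h t) \<partial>K x)) \<in> borel_measurable torus"
    using inner_meas[OF D, of "\<lambda>z. ennreal (h (snd z))"] by simp
  then show ?thesis
    by (rule measurable_cong[THEN iffD1, rotated]) (simp add: inner_integral_eq(1)[OF D hm h0 hb])
qed

lemma disint_integral_bounded:
  fixes \<mu> :: "((real^'d) \<times> real) measure" and K :: "real^'d \<Rightarrow> real measure" and h :: "real \<Rightarrow> real"
  assumes P: "\<mu> \<in> P2L" and D: "disintegration \<mu> K" and hm[measurable]: "h \<in> borel_measurable borel"
    and h0: "\<And>t. 0 \<le> h t" and hb: "\<And>t. h t \<le> B"
  shows "(\<integral> z. h (snd z) \<partial>\<mu>) = (\<integral> x. (\<integral> t. h t \<partial>K x) \<partial>torus)"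
proof -
  have "(\<integral> z. h (snd z) \<partial>\<mu>) = enn2real (\<integral>\<^sup>+ z. ennreal (h (snd z)) \<partial>\<mu>)"
  proof -
    have "(\<lambda>z. h (snd z)) \<in> borel_measurable \<mu>" by (rule P2L_meas[OF P]) measurable
    then show ?thesis by (rule integral_eq_nn_integral) (simp add: h0)
  qed
  also have "(\<integral>\<^sup>+ z. ennreal (h (snd z)) \<partial>\<mu>) = (\<integral>\<^sup>+ x. (\<integral>\<^sup>+ t. ennreal (h t) \<partial>K x) \<partial>torus)"
    using disint_nn_integral[OF P2L_sets[OF P] D, of "\<lambda>z. ennreal (h (snd z))"] by simp
  also have "\<dots> = (\<integral>\<^sup>+ x. ennreal (\<integral> t. h t \<partial>K x) \<partial>torus)"
    by (rule nn_integral_cong) (simp add: inner_integral_eq(2)[OF D hm h0 hb])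
  also have "enn2real \<dots> = (\<integral> x. (\<integral> t. h t \<partial>K x) \<partial>torus)"
  proof -
    have nn: "0 \<le> (\<integral> t. h t \<partial>K x)" for x by (simp add: h0)
    show ?thesis
      by (rule integral_eq_nn_integral[symmetric]) (use inner_integral_meas[OF D hm h0 hb] nn in auto)
  qed
  finally show ?thesis .
qed

lemma ennreal_minus_le_of_le: "(a::ennreal) \<le> b + d \<Longrightarrow> b < top \<Longrightarrow> a - b \<le> d"
  by (auto simp: ennreal_minus_le_iff)

lemma int_bound:
  assumes um: "u \<in> borel_measurable M" and vm: "v \<in> borel_measurable M"
    and ae: "AE x in M. u x \<le> v x + ennreal c * w x" and c: "0 < c" and vf: "AE x in M. v x < top"
  shows "(\<integral>\<^sup>+ x. u x \<partial>M) \<le> (\<integral>\<^sup>+ x. v x \<partial>M) + ennreal c * (\<integral>\<^sup>+ x. w x \<partial>M)"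
proof -
  define D where "D x = u x - v x" for x
  have Dm: "D \<in> borel_measurable M" unfolding D_def using um vm by measurable
  have "AE x in M. ennreal (1/c) * D x \<le> w x"
    using ae vf
  proof eventually_elim
    case (elim x)
    then have "D x \<le> ennreal c * w x" unfolding D_def by (intro ennreal_minus_le_of_le)
    then have "ennreal (1/c) * D x \<le> ennreal (1/c) * (ennreal c * w x)" by (rule mult_left_mono) simp
    also have "\<dots> = w x" using c by (simp add: mult.assoc[symmetric] ennreal_mult[symmetric])
    finally show ?case .
  qed
  then have "(\<integral>\<^sup>+ x. ennreal (1/c) * D x \<partial>M) \<le> (\<integral>\<^sup>+ x. w x \<partial>M)" by (rule nn_integral_mono_AE)
  then have "ennreal (1/c) * (\<integral>\<^sup>+ x. D x \<partial>M) \<le> (\<integral>\<^sup>+ x. w x \<partial>M)"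
    by (simp add: nn_integral_cmult Dm)
  then have "ennreal c * (ennreal (1/c) * (\<integral>\<^sup>+ x. D x \<partial>M)) \<le> ennreal c * (\<integral>\<^sup>+ x. w x \<partial>M)"
    by (rule mult_left_mono) simp
  moreover have "ennreal c * (ennreal (1/c) * (\<integral>\<^sup>+ x. D x \<partial>M)) = (\<integral>\<^sup>+ x. D x \<partial>M)"
    using c by (simp add: mult.assoc[symmetric] ennreal_mult[symmetric])
  ultimately have DI: "(\<integral>\<^sup>+ x. D x \<partial>M) \<le> ennreal c * (\<integral>\<^sup>+ x. w x \<partial>M)" by simp
  have "(\<integral>\<^sup>+ x. u x \<partial>M) \<le> (\<integral>\<^sup>+ x. D x + v x \<partial>M)"
    unfolding D_def by (rule nn_integral_mono) (rule ennreal_le_minus_add)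
  also have "\<dots> = (\<integral>\<^sup>+ x. D x \<partial>M) + (\<integral>\<^sup>+ x. v x \<partial>M)" by (rule nn_integral_add[OF Dm vm])
  finally show ?thesis using DI by (metis add.commute add_left_mono order_trans)
qed

lemma m2_le_W2sq':
  assumes P: "real_distribution P" and Q: "real_distribution Q" and fin: "W2sq P Q < top" and e: "0 < e"
  shows "m2 Q \<le> ennreal (1 + e) * m2 P + ennreal (1 + 1/e) * W2sq P Q"
proof (rule ennreal_le_epsilon)
  fix d :: real assume d: "0 < d"
  define c where "c = 1 + 1/e"
  have c: "0 < c" using e by (simp add: c_def add_pos_pos)
  obtain \<pi> where \<pi>: "\<pi> \<in> couplings P Q"
    and cost: "(\<integral>\<^sup>+ p. ennreal ((fst p - snd p)\<^sup>2) \<partial>\<pi>) < W2sq P Q + ennreal (d / c)"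
    using W2sq_approx[OF fin, of "d/c"] d c by auto
  have m1: "(\<lambda>p. (1 + e) * (fst p)\<^sup>2) \<in> borel_measurable \<pi>" by (rule coupling_meas[OF \<pi>]) simp
  have m3: "(\<lambda>p. c * (fst p - snd p)\<^sup>2) \<in> borel_measurable \<pi>" by (rule coupling_meas[OF \<pi>]) simp
  have m4: "(\<lambda>p. (fst p - snd p)\<^sup>2) \<in> borel_measurable \<pi>" by (rule coupling_meas[OF \<pi>]) simp
  have m5: "(\<lambda>p. (fst p)\<^sup>2) \<in> borel_measurable \<pi>" by (rule coupling_meas[OF \<pi>]) simp
  have "m2 Q = (\<integral>\<^sup>+ p. ennreal ((snd p)\<^sup>2) \<partial>\<pi>)"
    unfolding m2_def by (rule coupling_snd[OF \<pi>, symmetric]) simp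
  also have "\<dots> \<le> (\<integral>\<^sup>+ p. (ennreal ((1 + e) * (fst p)\<^sup>2) + ennreal (c * (fst p - snd p)\<^sup>2)) \<partial>\<pi>)"
  proof (rule nn_integral_mono)
    fix p :: "real \<times> real"
    have "(snd p)\<^sup>2 \<le> (1 + e) * (fst p)\<^sup>2 + c * (snd p - fst p)\<^sup>2"
      unfolding c_def by (rule sq_split_ineq[OF e])
    also have "(snd p - fst p)\<^sup>2 = (fst p - snd p)\<^sup>2" by (simp add: power2_commute)
    finally have "ennreal ((snd p)\<^sup>2) \<le> ennreal ((1 + e) * (fst p)\<^sup>2 + c * (fst p - snd p)\<^sup>2)"
      by (rule ennreal_leI)
    also have "\<dots> = ennreal ((1 + e) * (fst p)\<^sup>2) + ennreal (c * (fst p - snd p)\<^sup>2)"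
      using e c by (intro ennreal_plus) auto
    finally show "ennreal ((snd p)\<^sup>2) \<le> ennreal ((1 + e) * (fst p)\<^sup>2) + ennreal (c * (fst p - snd p)\<^sup>2)" .
  qed
  also have "\<dots> = (\<integral>\<^sup>+ p. ennreal ((1 + e) * (fst p)\<^sup>2) \<partial>\<pi>) + (\<integral>\<^sup>+ p. ennreal (c * (fst p - snd p)\<^sup>2) \<partial>\<pi>)"
    by (rule nn_integral_add) (use m1 m3 in auto)
  also have "(\<integral>\<^sup>+ p. ennreal ((1 + e) * (fst p)\<^sup>2) \<partial>\<pi>) = ennreal (1 + e) * (\<integral>\<^sup>+ p. ennreal ((fst p)\<^sup>2) \<partial>\<pi>)"
    using e m5 by (subst nn_integral_cmult[symmetric]) (auto intro!: nn_integral_cong simp: ennreal_mult)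
  also have "(\<integral>\<^sup>+ p. ennreal ((fst p)\<^sup>2) \<partial>\<pi>) = m2 P"
    unfolding m2_def by (rule coupling_fst[OF \<pi>]) simp
  also have "(\<integral>\<^sup>+ p. ennreal (c * (fst p - snd p)\<^sup>2) \<partial>\<pi>) = ennreal c * (\<integral>\<^sup>+ p. ennreal ((fst p - snd p)\<^sup>2) \<partial>\<pi>)"
    using c m4 by (subst nn_integral_cmult[symmetric]) (auto intro!: nn_integral_cong simp: ennreal_mult)
  also have "\<dots> \<le> ennreal c * (W2sq P Q + ennreal (d / c))"
    using cost by (intro mult_left_mono) auto
  also have "\<dots> = ennreal c * W2sq P Q + ennreal d"
  proof -
    have "ennreal c * ennreal (d / c) = ennreal d" using c d by (simp add: ennreal_mult[symmetric])
    then show ?thesis by (simp add: distrib_left)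
  qed
  finally show "m2 Q \<le> ennreal (1 + e) * m2 P + ennreal (1 + 1/e) * W2sq P Q + ennreal d"
    unfolding c_def by (simp add: add.assoc)
qed

lemma conv_from_bounds:
  fixes a i :: "nat \<Rightarrow> real" and b :: real
  assumes up: "\<And>e n. 0 < e \<Longrightarrow> a n \<le> (1 + e) * b + (1 + 1/e) * i n"
    and lo: "\<And>e n. 0 < e \<Longrightarrow> b \<le> (1 + e) * a n + (1 + 1/e) * i n"
    and i: "i \<longlonglongrightarrow> 0" and a0: "\<And>n. 0 \<le> a n" and b0: "0 \<le> b"
  shows "a \<longlonglongrightarrow> b"
proof (rule LIMSEQ_I)
  fix r :: real assume r: "0 < r"
  define e where "e = min 1 (r / (8 * b + 8))"
  have e0: "0 < e" using r b0 by (simp add: e_def)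
  have e1: "e \<le> 1" by (simp add: e_def)
  have eb: "e * (8 * b + 8) \<le> r"
  proof -
    have "e \<le> r / (8 * b + 8)" by (simp add: e_def)
    moreover have "0 < 8 * b + 8" using b0 by simp
    ultimately show ?thesis by (simp add: pos_le_divide_eq)
  qed
  have "0 < r / 8 / (1 + 1/e)" using r e0 by (simp add: add_pos_pos)
  from LIMSEQ_D[OF i this] obtain N where N: "\<And>n. n \<ge> N \<Longrightarrow> \<bar>i n\<bar> < r / 8 / (1 + 1/e)" by auto
  show "\<exists>no. \<forall>n\<ge>no. norm (a n - b) < r"
  proof (intro exI allI impI)
    fix n assume n: "N \<le> n"
    have ce: "0 < 1 + 1/e" using e0 by (simp add: add_pos_pos)
    have "(1 + 1/e) * \<bar>i n\<bar> < r / 8"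
      using N[OF n] ce by (simp add: field_simps)
    moreover have "(1 + 1/e) * i n \<le> (1 + 1/e) * \<bar>i n\<bar>" using ce by (intro mult_left_mono) auto
    ultimately have ii: "(1 + 1/e) * i n < r / 8" by linarith
    have u: "a n \<le> (1 + e) * b + (1 + 1/e) * i n" by (rule up[OF e0])
    have l: "b \<le> (1 + e) * a n + (1 + 1/e) * i n" by (rule lo[OF e0])
    have "e * (8 * b + 8) = 8 * (e * b) + 8 * e" by (simp add: algebra_simps)
    then have eb': "e * b \<le> r / 8" using eb e0 by linarith
    have "(1 + e) * b \<le> 2 * b" using e1 b0 by (intro mult_right_mono) auto
    then have an: "a n \<le> 2 * b + r / 8" using u ii by linarith
    have "e * a n \<le> e * (2 * b + r / 8)" using an e0 by (simp add: mult_left_mono)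
    also have "\<dots> = 2 * (e * b) + e * (r / 8)" by (simp add: algebra_simps)
    also have "e * (r / 8) \<le> r / 8" using e1 r by (simp add: mult_left_le_one_le)
    finally have ea: "e * a n \<le> 2 * (r / 8) + r / 8" using eb' by linarith
    have d1: "(1 + e) * b = b + e * b" "(1 + e) * a n = a n + e * a n" by (simp_all add: distrib_right)
    have "a n - b < r" using u ii eb' d1(1) r by linarith
    moreover have "b - a n < r" using l ii ea d1(2) r by linarith
    ultimately show "norm (a n - b) < r" by simp
  qed
qed

lemma cts_step_lip:
  assumes ab: "a < b"
  shows "\<bar>cts_step a b s - cts_step a b t\<bar> \<le> (1 / (b - a)) * \<bar>s - t\<bar>"
proof -
  have eq: "cts_step a b x = min 1 (max 0 ((b - x) / (b - a)))" for x
  proof -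
    have "(b - x) / (b - a) \<ge> 1 \<longleftrightarrow> x \<le> a" using ab by (simp add: field_simps)
    moreover have "(b - x) / (b - a) \<le> 0 \<longleftrightarrow> x \<ge> b" using ab by (simp add: field_simps)
    ultimately show ?thesis unfolding cts_step_def by (auto simp: min_def max_def)
  qed
  have clamp: "\<bar>min 1 (max 0 u) - min 1 (max 0 v)\<bar> \<le> \<bar>u - v\<bar>" for u v :: real
    by (simp add: min_def max_def abs_if)
  have "(b - s) / (b - a) - (b - t) / (b - a) = (t - s) / (b - a)" by (simp add: diff_divide_distrib[symmetric])
  then have "\<bar>(b - s) / (b - a) - (b - t) / (b - a)\<bar> = \<bar>t - s\<bar> / (b - a)" using ab by simp
  then have "\<bar>(b - s) / (b - a) - (b - t) / (b - a)\<bar> = (1 / (b - a)) * \<bar>s - t\<bar>" by (simp add: abs_minus_commute)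
  then show ?thesis unfolding eq using clamp by metis
qed

lemma cts_step_bounds: "0 \<le> cts_step a b t" "cts_step a b t \<le> 1" if "a < b"
  using that by (auto simp: cts_step_def field_simps)

lemma cts_step_meas[measurable]: "cts_step a b \<in> borel_measurable borel"
  unfolding cts_step_def by measurable

section \<open>Forward direction\<close>

lemma enn_bound_to_real:
  assumes "X \<le> ennreal p * Y + ennreal q * Z" "Y < top" "Z < top" "0 \<le> p" "0 \<le> q"
  shows "enn2real X \<le> p * enn2real Y + q * enn2real Z"
proof -
  obtain y z where yz: "Y = ennreal y" "Z = ennreal z" "0 \<le> y" "0 \<le> z"
    using assms(2,3) by (cases Y; cases Z) auto
  have "ennreal (p * y + q * z) = ennreal (p * y) + ennreal (q * z)"
    by (rule ennreal_plus) (use yz assms(4,5) in auto)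
  also have "ennreal (p * y) = ennreal p * ennreal y" by (rule ennreal_mult) (use yz assms(4,5) in auto)
  also have "ennreal (q * z) = ennreal q * ennreal z" by (rule ennreal_mult) (use yz assms(4,5) in auto)
  finally have "ennreal p * Y + ennreal q * Z = ennreal (p * y + q * z)" using yz by simp
  then have "X \<le> ennreal (p * y + q * z)" using assms(1) by simp
  then have "enn2real X \<le> p * y + q * z"
    using yz assms(4,5) by (cases X) (auto simp: top_unique simp del: ennreal_plus)
  then show ?thesis using yz by simp
qed

lemma W_good:
  fixes \<mu>s :: "nat \<Rightarrow> ((real^'d) \<times> real) measure" and \<mu> :: "((real^'d) \<times> real) measure"
    and Ks :: "nat \<Rightarrow> real^'d \<Rightarrow> real measure" and K :: "real^'d \<Rightarrow> real measure"
  assumes Ps: "\<And>n. \<mu>s n \<in> P2L" and P: "\<mu> \<in> P2L"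
    and Ds: "\<And>n. disintegration (\<mu>s n) (Ks n)" and D: "disintegration \<mu> K"
  shows "AE x in torus. \<forall>n. m2 (Ks n x) < \<infinity> \<and> m2 (K x) < \<infinity>"
proof -
  have "\<forall>n. AE x in torus. m2 (Ks n x) < \<infinity> \<and> m2 (K x) < \<infinity>"
  proof
    fix n
    show "AE x in torus. m2 (Ks n x) < \<infinity> \<and> m2 (K x) < \<infinity>"
      using m2_ae_fin[OF Ps Ds, of n] m2_ae_fin[OF P D] by eventually_elim auto
  qed
  then show ?thesis by (simp add: AE_all_countable)
qed

lemma W2sq_fin_good:
  assumes "real_distribution P" "real_distribution Q" "m2 P < \<infinity>" "m2 Q < \<infinity>"
  shows "W2sq P Q < top"
proof -
  have "W2sq P Q \<le> 2 * m2 P + 2 * m2 Q" by (rule W2sq_le_m2[OF assms(1,2)])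
  also have "\<dots> < top" using assms(3,4) by (simp add: ennreal_mult_less_top)
  finally show ?thesis .
qed

lemma W_int_fin:
  fixes \<mu>s :: "nat \<Rightarrow> ((real^'d) \<times> real) measure" and \<mu> :: "((real^'d) \<times> real) measure"
    and Ks :: "nat \<Rightarrow> real^'d \<Rightarrow> real measure" and K :: "real^'d \<Rightarrow> real measure"
  assumes Ps: "\<And>n. \<mu>s n \<in> P2L" and P: "\<mu> \<in> P2L"
    and Ds: "\<And>n. disintegration (\<mu>s n) (Ks n)" and D: "disintegration \<mu> K"
  shows "(\<integral>\<^sup>+ x. ennreal ((W2 (Ks n x) (K x))\<^sup>2) \<partial>torus) < \<infinity>"
proof -
  have "(\<integral>\<^sup>+ x. ennreal ((W2 (Ks n x) (K x))\<^sup>2) \<partial>torus) \<le> (\<integral>\<^sup>+ x. 2 * m2 (Ks n x) + 2 * m2 (K x) \<partial>torus)"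
  proof (rule nn_integral_mono)
    fix x :: "real^'d" assume x: "x \<in> space torus"
    have "ennreal ((W2 (Ks n x) (K x))\<^sup>2) \<le> W2sq (Ks n x) (K x)" by (rule W2_sq_le)
    also have "\<dots> \<le> 2 * m2 (Ks n x) + 2 * m2 (K x)" by (rule W2sq_le_m2[OF disint_rd[OF Ds x] disint_rd[OF D x]])
    finally show "ennreal ((W2 (Ks n x) (K x))\<^sup>2) \<le> 2 * m2 (Ks n x) + 2 * m2 (K x)" .
  qed
  also have "\<dots> = 2 * (\<integral>\<^sup>+ x. m2 (Ks n x) \<partial>torus) + 2 * (\<integral>\<^sup>+ x. m2 (K x) \<partial>torus)"
    using m2_meas[OF Ds] m2_meas[OF D] by (simp add: nn_integral_add nn_integral_cmult)
  also have "\<dots> < \<infinity>" using m2_int_fin[OF Ps Ds] m2_int_fin[OF P D] by (simp add: ennreal_mult_less_top)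
  finally show ?thesis .
qed

lemma forward_i:
  fixes \<mu>s :: "nat \<Rightarrow> ((real^'d) \<times> real) measure" and \<mu> :: "((real^'d) \<times> real) measure"
    and Ks :: "nat \<Rightarrow> real^'d \<Rightarrow> real measure" and K :: "real^'d \<Rightarrow> real measure"
  assumes Ps: "\<And>n. \<mu>s n \<in> P2L" and P: "\<mu> \<in> P2L"
    and Ds: "\<And>n. disintegration (\<mu>s n) (Ks n)" and D: "disintegration \<mu> K"
    and I0: "(\<lambda>n. \<integral>\<^sup>+ x. ennreal ((W2 (Ks n x) (K x))\<^sup>2) \<partial>torus) \<longlonglongrightarrow> 0"
  shows "(\<lambda>n. \<integral> z. (snd z)\<^sup>2 \<partial>\<mu>s n) \<longlonglongrightarrow> (\<integral> z. (snd z)\<^sup>2 \<partial>\<mu>)"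
proof -
  define A where "A n = (\<integral>\<^sup>+ x. m2 (Ks n x) \<partial>torus)" for n
  define B where "B = (\<integral>\<^sup>+ x. m2 (K x) \<partial>torus)"
  define I where "I n = (\<integral>\<^sup>+ x. ennreal ((W2 (Ks n x) (K x))\<^sup>2) \<partial>torus)" for n
  have Af: "A n < top" for n unfolding A_def using m2_int_fin[OF Ps Ds] by simp
  have Bf: "B < top" unfolding B_def using m2_int_fin[OF P D] by simp
  have If: "I n < top" for n unfolding I_def using W_int_fin[OF Ps P Ds D] by simp
  have good: "AE x in torus. \<forall>n. m2 (Ks n x) < \<infinity> \<and> m2 (K x) < \<infinity>" by (rule W_good[OF Ps P Ds D])
  have up: "A n \<le> ennreal (1 + e) * B + ennreal (1 + 1/e) * I n" if e: "0 < e" for e n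
  proof -
    have "A n \<le> (\<integral>\<^sup>+ x. ennreal (1 + e) * m2 (K x) \<partial>torus) + ennreal (1 + 1/e) * I n"
      unfolding A_def I_def
    proof (rule int_bound)
      show "(\<lambda>x. m2 (Ks n x)) \<in> borel_measurable torus" by (rule m2_meas[OF Ds])
      show "(\<lambda>x. ennreal (1 + e) * m2 (K x)) \<in> borel_measurable torus" using m2_meas[OF D] by measurable
      show "0 < 1 + 1/e" using e by (simp add: add_pos_pos)
      show "AE x in torus. ennreal (1 + e) * m2 (K x) < top"
        using good by eventually_elim (simp add: ennreal_mult_less_top)
      show "AE x in torus. m2 (Ks n x) \<le> ennreal (1 + e) * m2 (K x) + ennreal (1 + 1/e) * ennreal ((W2 (Ks n x) (K x))\<^sup>2)"
        using good AE_space
      proof eventually_elim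
        case (elim x)
        note rd = disint_rd[OF Ds elim(2)] disint_rd[OF D elim(2)]
        have fin: "W2sq (Ks n x) (K x) < top" using W2sq_fin_good[OF rd] elim(1) by auto
        show ?case using m2_le_W2sq[OF rd fin e] W2_sq_eq[OF fin] by simp
      qed
    qed
    also have "(\<integral>\<^sup>+ x. ennreal (1 + e) * m2 (K x) \<partial>torus) = ennreal (1 + e) * B"
      unfolding B_def by (rule nn_integral_cmult) (rule m2_meas[OF D])
    finally show ?thesis .
  qed
  have lo: "B \<le> ennreal (1 + e) * A n + ennreal (1 + 1/e) * I n" if e: "0 < e" for e n
  proof -
    have "B \<le> (\<integral>\<^sup>+ x. ennreal (1 + e) * m2 (Ks n x) \<partial>torus) + ennreal (1 + 1/e) * I n"
      unfolding B_def I_def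
    proof (rule int_bound)
      show "(\<lambda>x. m2 (K x)) \<in> borel_measurable torus" by (rule m2_meas[OF D])
      show "(\<lambda>x. ennreal (1 + e) * m2 (Ks n x)) \<in> borel_measurable torus" using m2_meas[OF Ds] by measurable
      show "0 < 1 + 1/e" using e by (simp add: add_pos_pos)
      show "AE x in torus. ennreal (1 + e) * m2 (Ks n x) < top"
        using good by eventually_elim (simp add: ennreal_mult_less_top)
      show "AE x in torus. m2 (K x) \<le> ennreal (1 + e) * m2 (Ks n x) + ennreal (1 + 1/e) * ennreal ((W2 (Ks n x) (K x))\<^sup>2)"
        using good AE_space
      proof eventually_elim
        case (elim x)
        note rd = disint_rd[OF Ds elim(2)] disint_rd[OF D elim(2)]
        have fin: "W2sq (Ks n x) (K x) < top" using W2sq_fin_good[OF rd] elim(1) by auto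
        show ?case using m2_le_W2sq'[OF rd fin e] W2_sq_eq[OF fin] by simp
      qed
    qed
    also have "(\<integral>\<^sup>+ x. ennreal (1 + e) * m2 (Ks n x) \<partial>torus) = ennreal (1 + e) * A n"
      unfolding A_def by (rule nn_integral_cmult) (rule m2_meas[OF Ds])
    finally show ?thesis .
  qed
  have i0: "(\<lambda>n. enn2real (I n)) \<longlonglongrightarrow> 0"
  proof -
    have "(\<lambda>n. enn2real (I n)) \<longlonglongrightarrow> enn2real 0"
      by (rule tendsto_enn2real) (use I0 in \<open>simp_all add: I_def\<close>)
    then show ?thesis by simp
  qed
  have "(\<lambda>n. enn2real (A n)) \<longlonglongrightarrow> enn2real B"
  proof (rule conv_from_bounds[OF _ _ i0])
    fix e :: real and n assume e: "0 < e"
    show "enn2real (A n) \<le> (1 + e) * enn2real B + (1 + 1/e) * enn2real (I n)"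
      by (rule enn_bound_to_real[OF up[OF e] Bf If]) (use e in auto)
    show "enn2real B \<le> (1 + e) * enn2real (A n) + (1 + 1/e) * enn2real (I n)"
      by (rule enn_bound_to_real[OF lo[OF e] Af If]) (use e in auto)
  qed auto
  moreover have "(\<integral> z. (snd z)\<^sup>2 \<partial>\<mu>s n) = enn2real (A n)" for n
    unfolding A_def by (rule sq_integral_eq[OF Ps Ds])
  moreover have "(\<integral> z. (snd z)\<^sup>2 \<partial>\<mu>) = enn2real B"
    unfolding B_def by (rule sq_integral_eq[OF P D])
  ultimately show ?thesis by simp
qed

lemma ennreal_split_le: "0 \<le> c \<Longrightarrow> ennreal a \<le> ennreal (a - c) + ennreal c"
proof (cases "c \<le> a")
  case True
  assume c: "0 \<le> c"
  then have "ennreal (a - c + c) = ennreal (a - c) + ennreal c" using True by (intro ennreal_plus) auto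
  then show ?thesis by simp
next
  case False
  assume c: "0 \<le> c"
  then have "ennreal a \<le> ennreal c" using False by (intro ennreal_leI) simp
  also have "\<dots> \<le> ennreal (a - c) + ennreal c" by simp
  finally show ?thesis .
qed

lemma forward_ii:
  fixes \<mu>s :: "nat \<Rightarrow> ((real^'d) \<times> real) measure" and \<mu> :: "((real^'d) \<times> real) measure"
    and Ks :: "nat \<Rightarrow> real^'d \<Rightarrow> real measure" and K :: "real^'d \<Rightarrow> real measure"
  assumes Ps: "\<And>n. \<mu>s n \<in> P2L" and P: "\<mu> \<in> P2L"
    and Ds: "\<And>n. disintegration (\<mu>s n) (Ks n)" and D: "disintegration \<mu> K"
    and I0: "(\<lambda>n. \<integral>\<^sup>+ x. ennreal ((W2 (Ks n x) (K x))\<^sup>2) \<partial>torus) \<longlonglongrightarrow> 0"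
    and r: "strict_mono (r :: nat \<Rightarrow> nat)"
  shows "\<exists>s :: nat \<Rightarrow> nat. strict_mono s \<and>
                 (\<exists>N. N \<in> null_sets torus \<and>
                    (\<forall>x \<in> torus_set - N. weakly_conv (\<lambda>l. Ks (r (s l)) x) (K x)))"
proof -
  define I where "I n = (\<integral>\<^sup>+ x. ennreal ((W2 (Ks n x) (K x))\<^sup>2) \<partial>torus)" for n
  have If: "I n < top" for n unfolding I_def using W_int_fin[OF Ps P Ds D] by simp
  interpret T: prob_space "torus :: (real^'d) measure" by (rule prob_torus[OF P])
  have good: "AE x in torus. \<forall>n. m2 (Ks n x) < \<infinity> \<and> m2 (K x) < \<infinity>" by (rule W_good[OF Ps P Ds D])
  have i0: "(\<lambda>n. enn2real (I n)) \<longlonglongrightarrow> 0"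
  proof -
    have "(\<lambda>n. enn2real (I n)) \<longlonglongrightarrow> enn2real 0"
      by (rule tendsto_enn2real) (use I0 in \<open>simp_all add: I_def\<close>)
    then show ?thesis by simp
  qed
  have "(\<lambda>n. enn2real (I (r n))) \<longlonglongrightarrow> 0"
    using LIMSEQ_subseq_LIMSEQ[OF i0 r] by (simp add: comp_def)
  from fast_subseq[OF this] obtain s :: "nat \<Rightarrow> nat" where s: "strict_mono s"
    and sb: "\<And>l. \<bar>enn2real (I (r (s l)))\<bar> < (1/4)^l" by blast
  define \<phi> where "\<phi> l = r (s l)" for l
  have Ib: "I (\<phi> l) \<le> ennreal ((1/4)^l)" for l
  proof -
    have "I (\<phi> l) = ennreal (enn2real (I (\<phi> l)))" using If[of "\<phi> l"] by (cases "I (\<phi> l)") auto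
    also have "\<dots> \<le> ennreal ((1/4)^l)" using sb[of l] unfolding \<phi>_def by (intro ennreal_leI) simp
    finally show ?thesis .
  qed
  have key: "AE x in torus. (\<lambda>l. (\<integral> t. cts_step q1 q2 t \<partial>Ks (\<phi> l) x) - (\<integral> t. cts_step q1 q2 t \<partial>K x)) \<longlonglongrightarrow> 0"
    if q: "q1 < q2" for q1 q2
  proof -
    define L where "L = 1 / (q2 - q1)"
    have L: "0 \<le> L" using q by (simp add: L_def)
    define h where "h l x = \<bar>(\<integral> t. cts_step q1 q2 t \<partial>Ks (\<phi> l) x) - (\<integral> t. cts_step q1 q2 t \<partial>K x)\<bar>" for l x
    have hm: "h l \<in> borel_measurable torus" for l
    proof -
      have "(\<lambda>x. \<integral> t. cts_step q1 q2 t \<partial>Ks (\<phi> l) x) \<in> borel_measurable torus"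
        by (rule inner_integral_meas[OF Ds, where B=1]) (use cts_step_bounds[OF q] in auto)
      moreover have "(\<lambda>x. \<integral> t. cts_step q1 q2 t \<partial>K x) \<in> borel_measurable torus"
        by (rule inner_integral_meas[OF D, where B=1]) (use cts_step_bounds[OF q] in auto)
      ultimately show ?thesis unfolding h_def by measurable
    qed
    have h0: "0 \<le> h l x" for l x by (simp add: h_def)
    have hb: "(\<integral>\<^sup>+ x. ennreal (h l x) \<partial>torus) \<le> ennreal ((1 + L\<^sup>2/4) * (1/2)^l)" for l
    proof -
      define \<delta> :: real where "\<delta> = (1/2)^l"
      have \<delta>: "0 < \<delta>" by (simp add: \<delta>_def)
      define c where "c = \<delta>\<^sup>2 * L\<^sup>2 / 4"
      have c: "0 \<le> c" by (simp add: c_def)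
      have pw: "AE x in torus. ennreal (\<delta> * h l x - c) \<le> ennreal ((W2 (Ks (\<phi> l) x) (K x))\<^sup>2)"
        using good AE_space
      proof eventually_elim
        case (elim x)
        note rd = disint_rd[OF Ds elim(2)] disint_rd[OF D elim(2)]
        have fin: "W2sq (Ks (\<phi> l) x) (K x) < top" using W2sq_fin_good[OF rd] elim(1) by auto
        have fb: "\<And>t. \<bar>cts_step q1 q2 t\<bar> \<le> 1" using cts_step_bounds[OF q] by (simp add: abs_le_iff)
        have lip: "\<And>s t. \<bar>cts_step q1 q2 s - cts_step q1 q2 t\<bar> \<le> L * \<bar>s - t\<bar>"
          unfolding L_def by (rule cts_step_lip[OF q])
        define \<Delta> where "\<Delta> = (\<integral> t. cts_step q1 q2 t \<partial>Ks (\<phi> l) x) - (\<integral> t. cts_step q1 q2 t \<partial>K x)"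
        have 1: "\<delta> * \<Delta> - \<delta>\<^sup>2 * L\<^sup>2 / 4 \<le> (W2 (Ks (\<phi> l) x) (K x))\<^sup>2"
          unfolding \<Delta>_def by (rule lip_le_W2[OF rd fin cts_step_meas fb lip L])
        have 2: "(- \<delta>) * \<Delta> - (- \<delta>)\<^sup>2 * L\<^sup>2 / 4 \<le> (W2 (Ks (\<phi> l) x) (K x))\<^sup>2"
          unfolding \<Delta>_def by (rule lip_le_W2[OF rd fin cts_step_meas fb lip L])
        have "\<delta> * h l x - c \<le> (W2 (Ks (\<phi> l) x) (K x))\<^sup>2"
        proof (cases "0 \<le> \<Delta>")
          case True
          then have "h l x = \<Delta>" unfolding h_def \<Delta>_def by simp
          then show ?thesis using 1 unfolding c_def by simp
        next
          case False
          then have "h l x = - \<Delta>" unfolding h_def \<Delta>_def by simp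
          then show ?thesis using 2 unfolding c_def by simp
        qed
        then show ?case by (rule ennreal_leI)
      qed
      have "(\<integral>\<^sup>+ x. ennreal (\<delta> * h l x) \<partial>torus) \<le> (\<integral>\<^sup>+ x. ennreal (\<delta> * h l x - c) + ennreal c \<partial>torus)"
        by (rule nn_integral_mono) (rule ennreal_split_le[OF c])
      also have "\<dots> = (\<integral>\<^sup>+ x. ennreal (\<delta> * h l x - c) \<partial>torus) + ennreal c"
        using hm by (subst nn_integral_add) (auto simp: T.emeasure_space_1)
      also have "\<dots> \<le> I (\<phi> l) + ennreal c"
        unfolding I_def by (intro add_right_mono nn_integral_mono_AE pw)
      also have "\<dots> \<le> ennreal ((1/4)^l) + ennreal c" by (intro add_right_mono Ib)
      also have "\<dots> = ennreal ((1/4)^l + c)" using c by (simp add: ennreal_plus)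
      finally have A: "(\<integral>\<^sup>+ x. ennreal (\<delta> * h l x) \<partial>torus) \<le> ennreal ((1/4)^l + c)" .
      have "(\<integral>\<^sup>+ x. ennreal (\<delta> * h l x) \<partial>torus) = ennreal \<delta> * (\<integral>\<^sup>+ x. ennreal (h l x) \<partial>torus)"
        using \<delta> hm h0 by (subst nn_integral_cmult[symmetric]) (auto simp: ennreal_mult)
      then have "ennreal \<delta> * (\<integral>\<^sup>+ x. ennreal (h l x) \<partial>torus) \<le> ennreal ((1/4)^l + c)" using A by simp
      then have "ennreal (1/\<delta>) * (ennreal \<delta> * (\<integral>\<^sup>+ x. ennreal (h l x) \<partial>torus)) \<le> ennreal (1/\<delta>) * ennreal ((1/4)^l + c)"
        by (rule mult_left_mono) simp
      moreover have "ennreal (1/\<delta>) * (ennreal \<delta> * (\<integral>\<^sup>+ x. ennreal (h l x) \<partial>torus)) = (\<integral>\<^sup>+ x. ennreal (h l x) \<partial>torus)"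
        using \<delta> by (simp add: mult.assoc[symmetric] ennreal_mult[symmetric])
      moreover have "ennreal (1/\<delta>) * ennreal ((1/4)^l + c) = ennreal (((1/4)^l + c) / \<delta>)"
      proof -
        have "ennreal (1/\<delta>) * ennreal ((1/4)^l + c) = ennreal (1/\<delta> * ((1/4)^l + c))"
          by (rule ennreal_mult[symmetric]) (use \<delta> c in auto)
        then show ?thesis by simp
      qed
      moreover have "((1/4)^l + c) / \<delta> = (1 + L\<^sup>2/4) * (1/2)^l"
      proof -
        have "(1/4::real)^l = \<delta>\<^sup>2" unfolding \<delta>_def by (simp add: power2_eq_square power_mult_distrib[symmetric])
        then show ?thesis using \<delta> unfolding c_def \<delta>_def by (simp add: field_simps power2_eq_square)
      qed
      ultimately show ?thesis by simp
    qed
    have "AE x in torus. (\<lambda>l. h l x) \<longlonglongrightarrow> 0"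
      by (rule summable_ae_zero[OF hm h0 hb]) (simp add: add_nonneg_nonneg)
    then show ?thesis
      by eventually_elim (simp add: h_def tendsto_rabs_zero_iff)
  qed
  have "AE x in torus. \<forall>q\<in>\<rat> \<times> \<rat>. fst q < snd q \<longrightarrow>
          (\<lambda>l. (\<integral> t. cts_step (fst q) (snd q) t \<partial>Ks (\<phi> l) x) - (\<integral> t. cts_step (fst q) (snd q) t \<partial>K x)) \<longlonglongrightarrow> 0"
  proof (subst AE_ball_countable)
    show "countable (\<rat> \<times> \<rat>)" by (intro countable_SIGMA countable_rat)
    show "\<forall>q\<in>\<rat> \<times> \<rat>. AE x in torus. fst q < snd q \<longrightarrow>
          (\<lambda>l. (\<integral> t. cts_step (fst q) (snd q) t \<partial>Ks (\<phi> l) x) - (\<integral> t. cts_step (fst q) (snd q) t \<partial>K x)) \<longlonglongrightarrow> 0"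
    proof
      fix q :: "real \<times> real" assume "q \<in> \<rat> \<times> \<rat>"
      show "AE x in torus. fst q < snd q \<longrightarrow>
          (\<lambda>l. (\<integral> t. cts_step (fst q) (snd q) t \<partial>Ks (\<phi> l) x) - (\<integral> t. cts_step (fst q) (snd q) t \<partial>K x)) \<longlonglongrightarrow> 0"
      proof (cases "fst q < snd q")
        case True
        show ?thesis using key[OF True] by eventually_elim simp
      next
        case False then show ?thesis by simp
      qed
    qed
  qed
  then have "AE x in torus. weakly_conv (\<lambda>l. Ks (\<phi> l) x) (K x)"
    using AE_space
  proof eventually_elim
    case (elim x)
    note rd = disint_rd[OF Ds elim(2)] disint_rd[OF D elim(2)]
    have "weak_conv_m (\<lambda>l. Ks (\<phi> l) x) (K x)"
    proof (rule rat_cts_step_imp_weak_conv_m)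
      show "real_distribution (Ks (\<phi> n) x)" for n by (rule disint_rd[OF Ds elim(2)])
      show "real_distribution (K x)" by (rule rd(2))
      fix a b :: real assume ab: "a \<in> \<rat>" "b \<in> \<rat>" "a < b"
      then have "(\<lambda>l. (\<integral> t. cts_step a b t \<partial>Ks (\<phi> l) x) - (\<integral> t. cts_step a b t \<partial>K x)) \<longlonglongrightarrow> 0"
        using elim(1) by auto
      then show "(\<lambda>n. integral\<^sup>L (Ks (\<phi> n) x) (cts_step a b)) \<longlonglongrightarrow> integral\<^sup>L (K x) (cts_step a b)"
        by (simp add: Lim_null[symmetric])
    qed
    then show ?case
      by (rule weak_conv_m_imp_weakly_conv[rotated 2]) (use rd disint_rd[OF Ds elim(2)] in auto)
  qed
  then obtain N where N: "{x \<in> space torus. \<not> weakly_conv (\<lambda>l. Ks (\<phi> l) x) (K x)} \<subseteq> N"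
    "emeasure torus N = 0" "N \<in> sets torus"
    by (auto elim!: AE_E)
  have "N \<in> null_sets torus" using N by (simp add: null_sets_def)
  moreover have "\<forall>x \<in> torus_set - N. weakly_conv (\<lambda>l. Ks (r (s l)) x) (K x)"
    using N(1) unfolding \<phi>_def space_torus by blast
  ultimately show ?thesis using s by blast
qed

section \<open>Converse direction\<close>

lemma TR_le_m2: "TR R P \<le> m2 P"
  unfolding TR_def m2_def by (intro nn_integral_mono ennreal_leI) (simp add: rho_def)

lemma rho_eq: "rho R t = t\<^sup>2 - min (t\<^sup>2) (R\<^sup>2)"
  by (simp add: rho_def min_def max_def)

lemma rho_le_sq: "rho R t \<le> t\<^sup>2" by (simp add: rho_def)

lemma integrable_rho:
  assumes "\<mu> \<in> P2L"
  shows "integrable \<mu> (\<lambda>z. rho R (snd z))"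
proof -
  have m: "(\<lambda>z. rho R (snd z)) \<in> borel_measurable \<mu>" by (rule P2L_meas[OF assms]) measurable
  show ?thesis
    by (rule Bochner_Integration.integrable_bound[OF integrable_sq[OF assms] m]) (auto simp: rho_nonneg rho_le_sq)
qed

lemma tail_to_zero:
  assumes P: "\<mu> \<in> P2L"
  shows "(\<lambda>R::nat. \<integral> z. rho (real R) (snd z) \<partial>\<mu>) \<longlonglongrightarrow> 0"
proof -
  have "(\<lambda>R::nat. \<integral> z. rho (real R) (snd z) \<partial>\<mu>) \<longlonglongrightarrow> (\<integral> z. 0 \<partial>\<mu>)"
  proof (rule integral_dominated_convergence[where w="\<lambda>z. (snd z)\<^sup>2"])
    show "(\<lambda>z. 0::real) \<in> borel_measurable \<mu>" by simp
    show "(\<lambda>z. rho (real R) (snd z)) \<in> borel_measurable \<mu>" for R by (rule P2L_meas[OF P]) measurable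
    show "integrable \<mu> (\<lambda>z. (snd z)\<^sup>2)" by (rule integrable_sq[OF P])
    show "AE z in \<mu>. norm (rho (real R) (snd z)) \<le> (snd z)\<^sup>2" for R by (simp add: rho_nonneg rho_le_sq)
    show "AE z in \<mu>. (\<lambda>R. rho (real R) (snd z)) \<longlonglongrightarrow> 0"
    proof (rule AE_I2, rule tendsto_eventually)
      fix z
      show "\<forall>\<^sub>F R in sequentially. rho (real R) (snd z) = 0"
      proof (rule eventually_sequentiallyI[of "nat \<lceil>\<bar>snd z\<bar>\<rceil>"])
        fix R assume "nat \<lceil>\<bar>snd z\<bar>\<rceil> \<le> R"
        then have "\<bar>snd z\<bar> \<le> real R" by linarith
        then have "(snd z)\<^sup>2 \<le> (real R)\<^sup>2" by (metis abs_le_square_iff abs_of_nat)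
        then show "rho (real R) (snd z) = 0" by (simp add: rho_def)
      qed
    qed
  qed
  then show ?thesis by simp
qed

lemma rho_nn_eq:
  assumes P: "\<mu> \<in> P2L"
  shows "(\<integral>\<^sup>+ z. ennreal (rho R (snd z)) \<partial>\<mu>) = ennreal (\<integral> z. rho R (snd z) \<partial>\<mu>)"
  by (rule nn_integral_eq_integral[OF integrable_rho[OF P]]) (simp add: rho_nonneg)

lemma rho_integral_split:
  assumes P: "\<mu> \<in> P2L"
  shows "(\<integral> z. rho R (snd z) \<partial>\<mu>) = (\<integral> z. (snd z)\<^sup>2 \<partial>\<mu>) - (\<integral> z. min ((snd z)\<^sup>2) (R\<^sup>2) \<partial>\<mu>)"
proof -
  interpret prob_space \<mu> by (rule P2L_prob[OF P])
  have m: "(\<lambda>z. min ((snd z)\<^sup>2) (R\<^sup>2)) \<in> borel_measurable \<mu>" by (rule P2L_meas[OF P]) measurable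
  have i: "integrable \<mu> (\<lambda>z. min ((snd z)\<^sup>2) (R\<^sup>2))"
    by (rule integrable_const_bound[where B="R\<^sup>2"]) (use m in auto)
  show ?thesis unfolding rho_eq by (rule Bochner_Integration.integral_diff[OF integrable_sq[OF P] i])
qed

lemma min_sq_cont: "continuous_on UNIV (\<lambda>t::real. min (t\<^sup>2) (R\<^sup>2))"
  by (intro continuous_intros)

lemma min_sq_bdd: "bounded (range (\<lambda>t::real. min (t\<^sup>2) (R\<^sup>2)))"
  by (rule boundedI[where B="R\<^sup>2"]) auto

lemma converse_rho_conv:
  fixes \<mu>s :: "nat \<Rightarrow> ((real^'d) \<times> real) measure" and \<mu> :: "((real^'d) \<times> real) measure"
    and Ks :: "nat \<Rightarrow> real^'d \<Rightarrow> real measure" and K :: "real^'d \<Rightarrow> real measure"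
  assumes Ps: "\<And>n. \<mu>s n \<in> P2L" and P: "\<mu> \<in> P2L"
    and Ds: "\<And>n. disintegration (\<mu>s n) (Ks n)" and D: "disintegration \<mu> K"
    and sq: "(\<lambda>l. \<integral> z. (snd z)\<^sup>2 \<partial>\<mu>s (\<phi> l)) \<longlonglongrightarrow> (\<integral> z. (snd z)\<^sup>2 \<partial>\<mu>)"
    and wc: "AE x in torus. weakly_conv (\<lambda>l. Ks (\<phi> l) x) (K x)"
  shows "(\<lambda>l. \<integral> z. rho R (snd z) \<partial>\<mu>s (\<phi> l)) \<longlonglongrightarrow> (\<integral> z. rho R (snd z) \<partial>\<mu>)"
proof -
  interpret T: prob_space "torus :: (real^'d) measure" by (rule prob_torus[OF P])
  define g where "g n x = (\<integral> t. min (t\<^sup>2) (R\<^sup>2) \<partial>Ks n x)" for n x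
  define g0 where "g0 x = (\<integral> t. min (t\<^sup>2) (R\<^sup>2) \<partial>K x)" for x
  have gm: "g n \<in> borel_measurable torus" for n
    unfolding g_def by (rule inner_integral_meas[OF Ds, where B="R\<^sup>2"]) auto
  have g0m: "g0 \<in> borel_measurable torus"
    unfolding g0_def by (rule inner_integral_meas[OF D, where B="R\<^sup>2"]) auto
  have ge: "(\<integral> z. min ((snd z)\<^sup>2) (R\<^sup>2) \<partial>\<mu>s n) = (\<integral> x. g n x \<partial>torus)" for n
    unfolding g_def by (rule disint_integral_bounded[OF Ps Ds, where B="R\<^sup>2"]) auto
  have g0e: "(\<integral> z. min ((snd z)\<^sup>2) (R\<^sup>2) \<partial>\<mu>) = (\<integral> x. g0 x \<partial>torus)"
    unfolding g0_def by (rule disint_integral_bounded[OF P D, where B="R\<^sup>2"]) auto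
  have "(\<lambda>l. \<integral> x. g (\<phi> l) x \<partial>torus) \<longlonglongrightarrow> (\<integral> x. g0 x \<partial>torus)"
  proof (rule integral_dominated_convergence[where w="\<lambda>x. R\<^sup>2"])
    show "g0 \<in> borel_measurable torus" by (rule g0m)
    show "g (\<phi> l) \<in> borel_measurable torus" for l by (rule gm)
    show "integrable (torus :: (real^'d) measure) (\<lambda>x. R\<^sup>2)" by simp
    show "AE x in torus. norm (g (\<phi> l) x) \<le> R\<^sup>2" for l
    proof (rule AE_I2)
      fix x :: "real^'d" assume x: "x \<in> space torus"
      interpret real_distribution "Ks (\<phi> l) x" by (rule disint_rd[OF Ds x])
      have i: "integrable (Ks (\<phi> l) x) (\<lambda>t. min (t\<^sup>2) (R\<^sup>2))"
        by (rule integrable_const_bound[where B="R\<^sup>2"]) auto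
      have "0 \<le> g (\<phi> l) x" unfolding g_def by simp
      moreover have "g (\<phi> l) x \<le> R\<^sup>2" unfolding g_def by (rule integral_le_const[OF i]) auto
      ultimately show "norm (g (\<phi> l) x) \<le> R\<^sup>2" by simp
    qed
    show "AE x in torus. (\<lambda>l. g (\<phi> l) x) \<longlonglongrightarrow> g0 x"
      using wc unfolding g_def g0_def weakly_conv_def
      by eventually_elim (use min_sq_cont min_sq_bdd in blast)
  qed
  then have "(\<lambda>l. (\<integral> z. (snd z)\<^sup>2 \<partial>\<mu>s (\<phi> l)) - (\<integral> z. min ((snd z)\<^sup>2) (R\<^sup>2) \<partial>\<mu>s (\<phi> l)))
      \<longlonglongrightarrow> (\<integral> z. (snd z)\<^sup>2 \<partial>\<mu>) - (\<integral> z. min ((snd z)\<^sup>2) (R\<^sup>2) \<partial>\<mu>)"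
    unfolding ge g0e by (intro tendsto_diff sq)
  then show ?thesis by (simp add: rho_integral_split[OF Ps] rho_integral_split[OF P])
qed

lemma converse_main:
  fixes \<mu>s :: "nat \<Rightarrow> ((real^'d) \<times> real) measure" and \<mu> :: "((real^'d) \<times> real) measure"
    and Ks :: "nat \<Rightarrow> real^'d \<Rightarrow> real measure" and K :: "real^'d \<Rightarrow> real measure"
  assumes Ps: "\<And>n. \<mu>s n \<in> P2L" and P: "\<mu> \<in> P2L"
    and Ds: "\<And>n. disintegration (\<mu>s n) (Ks n)" and D: "disintegration \<mu> K"
    and sq: "(\<lambda>l. \<integral> z. (snd z)\<^sup>2 \<partial>\<mu>s (\<phi> l)) \<longlonglongrightarrow> (\<integral> z. (snd z)\<^sup>2 \<partial>\<mu>)"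
    and wc: "AE x in torus. weakly_conv (\<lambda>l. Ks (\<phi> l) x) (K x)"
  shows "(\<lambda>l. \<integral>\<^sup>+ x. ennreal ((W2 (Ks (\<phi> l) x) (K x))\<^sup>2) \<partial>torus) \<longlonglongrightarrow> 0"
proof (rule ennreal_tendsto_zeroI)
  fix \<epsilon> :: real assume \<epsilon>: "0 < \<epsilon>"
  define e where "e = \<epsilon> / 20"
  have e: "0 < e" using \<epsilon> by (simp add: e_def)
  interpret T: prob_space "torus :: (real^'d) measure" by (rule prob_torus[OF P])
  define I where "I l = (\<integral>\<^sup>+ x. ennreal ((W2 (Ks (\<phi> l) x) (K x))\<^sup>2) \<partial>torus)" for l
  have If: "I l < top" for l unfolding I_def using W_int_fin[OF Ps P Ds D] by simp
  have good: "AE x in torus. (\<forall>n. m2 (Ks n x) < \<infinity> \<and> m2 (K x) < \<infinity>) \<and>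
      weakly_conv (\<lambda>l. Ks (\<phi> l) x) (K x) \<and> x \<in> space torus"
    using W_good[OF Ps P Ds D] wc AE_space by eventually_elim auto
  obtain Rn :: nat where Rn: "(\<integral> z. rho (real Rn) (snd z) \<partial>\<mu>) < e"
  proof -
    from LIMSEQ_D[OF tail_to_zero[OF P] e] obtain N where "\<And>n. n \<ge> N \<Longrightarrow> \<bar>\<integral> z. rho (real n) (snd z) \<partial>\<mu>\<bar> < e"
      by auto
    then have "(\<integral> z. rho (real N) (snd z) \<partial>\<mu>) < e" by fastforce
    then show ?thesis by (rule that)
  qed
  define R where "R = real Rn"
  have R: "0 \<le> R" by (simp add: R_def)
  define TRs where "TRs l = (\<integral>\<^sup>+ x. TR R (Ks (\<phi> l) x) \<partial>torus)" for l
  define TR0 where "TR0 = (\<integral>\<^sup>+ x. TR R (K x) \<partial>torus)"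
  have TRs_eq: "TRs l = ennreal (\<integral> z. rho R (snd z) \<partial>\<mu>s (\<phi> l))" for l
    unfolding TRs_def TR_disint[OF Ps Ds, symmetric] by (rule rho_nn_eq[OF Ps])
  have TR0_eq: "TR0 = ennreal (\<integral> z. rho R (snd z) \<partial>\<mu>)"
    unfolding TR0_def TR_disint[OF P D, symmetric] by (rule rho_nn_eq[OF P])
  have TR0b: "TR0 \<le> ennreal e" unfolding TR0_eq using Rn unfolding R_def by (intro ennreal_leI) simp
  have ev1: "eventually (\<lambda>l. TRs l \<le> ennreal (2 * e)) sequentially"
  proof -
    have "(\<lambda>l. \<integral> z. rho R (snd z) \<partial>\<mu>s (\<phi> l)) \<longlonglongrightarrow> (\<integral> z. rho R (snd z) \<partial>\<mu>)"
      by (rule converse_rho_conv[where \<mu>s=\<mu>s and \<mu>=\<mu> and Ks=Ks and K=K and \<phi>=\<phi>, OF Ps P Ds D sq wc])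
    moreover have "(\<integral> z. rho R (snd z) \<partial>\<mu>) < 2 * e" using Rn e unfolding R_def by simp
    ultimately have "eventually (\<lambda>l. (\<integral> z. rho R (snd z) \<partial>\<mu>s (\<phi> l)) < 2 * e) sequentially"
      by (rule order_tendstoD(2))
    then show ?thesis by eventually_elim (simp add: TRs_eq ennreal_leI)
  qed
  have "\<forall>l. \<exists>g. g \<in> borel_measurable torus \<and> (\<forall>x. g x \<le> ennreal ((W2 (Ks (\<phi> l) x) (K x))\<^sup>2)) \<and>
          I l \<le> (\<integral>\<^sup>+ x. g x \<partial>torus) + ennreal e"
    using lower_approx[OF _ e] If unfolding I_def by blast
  then obtain G where G: "\<And>l. G l \<in> borel_measurable torus"
    "\<And>l x. G l x \<le> ennreal ((W2 (Ks (\<phi> l) x) (K x))\<^sup>2)"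
    "\<And>l. I l \<le> (\<integral>\<^sup>+ x. G l x \<partial>torus) + ennreal e"
    by metis
  define h where "h l x = 6 * TR R (Ks (\<phi> l) x) + 6 * TR R (K x)" for l x
  have hm: "h l \<in> borel_measurable torus" for l
    unfolding h_def using TR_meas[OF Ds[of "\<phi> l"], where R=R] TR_meas[OF D, where R=R] by measurable
  define u where "u l x = min (G l x - h l x) (ennreal (16 * R\<^sup>2))" for l x
  have um: "u l \<in> borel_measurable torus" for l unfolding u_def using G(1) hm by measurable
  have perx: "AE x in torus. \<exists>f::nat \<Rightarrow> ennreal. f \<longlonglongrightarrow> 0 \<and> (\<forall>l. G l x - h l x \<le> f l) \<and> (\<forall>l. f l \<le> ennreal (16 * R\<^sup>2))"
    using good
  proof eventually_elim
    case (elim x)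
    then have x: "x \<in> space torus" and fin: "\<And>n. m2 (Ks n x) < \<infinity>" "m2 (K x) < \<infinity>"
      and wcx: "weakly_conv (\<lambda>l. Ks (\<phi> l) x) (K x)" by auto
    have rds: "\<And>l. real_distribution (Ks (\<phi> l) x)" by (rule disint_rd[OF Ds x])
    have rd: "real_distribution (K x)" by (rule disint_rd[OF D x])
    have wcm: "weak_conv_m (\<lambda>l. Ks (\<phi> l) x) (K x)" by (rule weakly_conv_imp_weak_conv_m[OF rds rd wcx])
    obtain f where f0: "f \<longlonglongrightarrow> 0" and fb: "\<And>l. f l \<le> ennreal (16 * R\<^sup>2)"
      and fW: "\<And>l. W2sq (Ks (\<phi> l) x) (K x) \<le> f l + 6 * TR R (Ks (\<phi> l) x) + 6 * TR R (K x)"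
      using skorohod_bound[OF rds rd wcm R] by blast
    have "G l x - h l x \<le> f l" for l
    proof (rule ennreal_minus_le_of_le)
      have "G l x \<le> ennreal ((W2 (Ks (\<phi> l) x) (K x))\<^sup>2)" by (rule G(2))
      also have "\<dots> \<le> W2sq (Ks (\<phi> l) x) (K x)" by (rule W2_sq_le)
      also have "\<dots> \<le> f l + 6 * TR R (Ks (\<phi> l) x) + 6 * TR R (K x)" by (rule fW)
      finally show "G l x \<le> h l x + f l" unfolding h_def by (simp add: ac_simps)
      have "TR R (Ks (\<phi> l) x) < top" using TR_le_m2[of R "Ks (\<phi> l) x"] fin(1)[of "\<phi> l"]
        by (simp add: le_less_trans)
      moreover have "TR R (K x) < top" using TR_le_m2[of R "K x"] fin(2) by (simp add: le_less_trans)
      ultimately show "h l x < top" unfolding h_def by (simp add: ennreal_mult_less_top)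
    qed
    then show ?case using f0 fb by blast
  qed
  have ulim: "AE x in torus. (\<lambda>l. u l x) \<longlonglongrightarrow> 0"
    using perx
  proof eventually_elim
    case (elim x)
    then obtain f :: "nat \<Rightarrow> ennreal" where f: "f \<longlonglongrightarrow> 0" "\<And>l. G l x - h l x \<le> f l" by blast
    show ?case
    proof (rule tendsto_sandwich[of "\<lambda>l. 0" _ _ f])
      show "\<forall>\<^sub>F l in sequentially. u l x \<le> f l"
        unfolding u_def by (intro always_eventually allI min.coboundedI1 f(2))
    qed (auto simp: f(1))
  qed
  have uint: "(\<lambda>l. \<integral>\<^sup>+ x. u l x \<partial>torus) \<longlonglongrightarrow> 0"
    by (rule ennreal_dom_conv[OF _ um _ _ ulim, where C="16 * R\<^sup>2"]) (auto simp: u_def T.finite_measure_axioms)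
  have ev2: "eventually (\<lambda>l. (\<integral>\<^sup>+ x. u l x \<partial>torus) < ennreal e) sequentially"
    by (rule order_tendstoD(2)[OF uint]) (use e in simp)
  have Gb: "(\<integral>\<^sup>+ x. G l x \<partial>torus) \<le> (\<integral>\<^sup>+ x. u l x \<partial>torus) + 6 * TRs l + 6 * TR0" for l
  proof -
    have "AE x in torus. G l x \<le> u l x + h l x"
      using perx
    proof eventually_elim
      case (elim x)
      then obtain f :: "nat \<Rightarrow> ennreal" where f: "\<And>l. G l x - h l x \<le> f l" "\<And>l. f l \<le> ennreal (16 * R\<^sup>2)" by blast
      have "G l x - h l x \<le> ennreal (16 * R\<^sup>2)" using f(1)[of l] f(2)[of l] by (rule order_trans)
      then have "u l x = G l x - h l x" unfolding u_def by (simp add: min_def)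
      then show ?case by (simp add: ennreal_le_minus_add)
    qed
    then have "(\<integral>\<^sup>+ x. G l x \<partial>torus) \<le> (\<integral>\<^sup>+ x. u l x + h l x \<partial>torus)" by (rule nn_integral_mono_AE)
    also have "\<dots> = (\<integral>\<^sup>+ x. u l x \<partial>torus) + (\<integral>\<^sup>+ x. h l x \<partial>torus)" by (rule nn_integral_add[OF um hm])
    also have "(\<integral>\<^sup>+ x. h l x \<partial>torus) = 6 * TRs l + 6 * TR0"
      unfolding h_def TRs_def TR0_def using TR_meas[OF Ds[of "\<phi> l"], where R=R] TR_meas[OF D, where R=R]
      by (simp add: nn_integral_add nn_integral_cmult)
    finally show ?thesis by (simp add: add.assoc)
  qed
  show "eventually (\<lambda>l. (\<integral>\<^sup>+ x. ennreal ((W2 (Ks (\<phi> l) x) (K x))\<^sup>2) \<partial>torus) \<le> ennreal \<epsilon>) sequentially"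
    using ev1 ev2
  proof eventually_elim
    case (elim l)
    have "I l \<le> (\<integral>\<^sup>+ x. G l x \<partial>torus) + ennreal e" by (rule G(3))
    also have "\<dots> \<le> ((\<integral>\<^sup>+ x. u l x \<partial>torus) + 6 * TRs l + 6 * TR0) + ennreal e" by (intro add_right_mono Gb)
    also have "\<dots> \<le> (ennreal e + 6 * ennreal (2 * e) + 6 * ennreal e) + ennreal e"
    proof -
      have a: "(\<integral>\<^sup>+ x. u l x \<partial>torus) \<le> ennreal e" using elim(2) by simp
      show ?thesis by (intro add_mono mult_left_mono order.refl) (use a elim(1) TR0b in auto)
    qed
    also have "\<dots> = ennreal (e + 6 * (2 * e) + 6 * e + e)"
      using e by (simp add: ennreal_abc[symmetric] ennreal_plus[symmetric] del: ennreal_plus)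
    also have "e + 6 * (2 * e) + 6 * e + e = \<epsilon>" unfolding e_def by simp
    finally show ?case unfolding I_def .
  qed
qed

theorem mainTheorem10:
  fixes \<mu>s :: "nat \<Rightarrow> ((real ^ 'd) \<times> real) measure"
    and \<mu> :: "((real ^ 'd) \<times> real) measure"
    and Ks :: "nat \<Rightarrow> (real ^ 'd) \<Rightarrow> real measure"
    and K :: "(real ^ 'd) \<Rightarrow> real measure"
  assumes "\<And>n. \<mu>s n \<in> P2L" and "\<mu> \<in> P2L"
    and "\<And>n. disintegration (\<mu>s n) (Ks n)" and "disintegration \<mu> K"
  shows "(\<lambda>n. WL (Ks n) K) \<longlonglongrightarrow> 0 \<longleftrightarrow>
           ((\<lambda>n. \<integral> z. (snd z)\<^sup>2 \<partial>(\<mu>s n)) \<longlonglongrightarrow> (\<integral> z. (snd z)\<^sup>2 \<partial>\<mu>)) \<and>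
           (\<forall>r :: nat \<Rightarrow> nat. strict_mono r \<longrightarrow>
              (\<exists>s :: nat \<Rightarrow> nat. strict_mono s \<and>
                 (\<exists>N. N \<in> null_sets torus \<and>
                    (\<forall>x \<in> torus_set - N. weakly_conv (\<lambda>l. Ks (r (s l)) x) (K x)))))"
proof -
  note Ps = assms(1) and P = assms(2) and Ds = assms(3) and D = assms(4)
  define I where "I n = (\<integral>\<^sup>+ x. ennreal ((W2 (Ks n x) (K x))\<^sup>2) \<partial>torus)" for n
  have If: "I n < top" for n unfolding I_def using W_int_fin[OF Ps P Ds D] by simp
  have WLI: "WL (Ks n) K = sqrt (enn2real (I n))" for n unfolding WL_def I_def ..
  show ?thesis
  proof
    assume WL0: "(\<lambda>n. WL (Ks n) K) \<longlonglongrightarrow> 0"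
    have "(\<lambda>n. (WL (Ks n) K)\<^sup>2) \<longlonglongrightarrow> 0\<^sup>2" by (intro tendsto_power WL0)
    moreover have "(WL (Ks n) K)\<^sup>2 = enn2real (I n)" for n unfolding WLI by simp
    ultimately have "(\<lambda>n. enn2real (I n)) \<longlonglongrightarrow> 0" by simp
    then have "(\<lambda>n. ennreal (enn2real (I n))) \<longlonglongrightarrow> ennreal 0" by (rule tendsto_ennrealI)
    moreover have "ennreal (enn2real (I n)) = I n" for n using If[of n] by (cases "I n") auto
    ultimately have I0: "(\<lambda>n. \<integral>\<^sup>+ x. ennreal ((W2 (Ks n x) (K x))\<^sup>2) \<partial>torus) \<longlonglongrightarrow> 0"
      unfolding I_def by simp
    show "((\<lambda>n. \<integral> z. (snd z)\<^sup>2 \<partial>(\<mu>s n)) \<longlonglongrightarrow> (\<integral> z. (snd z)\<^sup>2 \<partial>\<mu>)) \<and>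
           (\<forall>r :: nat \<Rightarrow> nat. strict_mono r \<longrightarrow>
              (\<exists>s :: nat \<Rightarrow> nat. strict_mono s \<and>
                 (\<exists>N. N \<in> null_sets torus \<and>
                    (\<forall>x \<in> torus_set - N. weakly_conv (\<lambda>l. Ks (r (s l)) x) (K x)))))"
      using forward_i[OF Ps P Ds D I0] forward_ii[OF Ps P Ds D I0] by blast
  next
    assume H: "((\<lambda>n. \<integral> z. (snd z)\<^sup>2 \<partial>(\<mu>s n)) \<longlonglongrightarrow> (\<integral> z. (snd z)\<^sup>2 \<partial>\<mu>)) \<and>
           (\<forall>r :: nat \<Rightarrow> nat. strict_mono r \<longrightarrow>
              (\<exists>s :: nat \<Rightarrow> nat. strict_mono s \<and>
                 (\<exists>N. N \<in> null_sets torus \<and>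
                    (\<forall>x \<in> torus_set - N. weakly_conv (\<lambda>l. Ks (r (s l)) x) (K x)))))"
    show "(\<lambda>n. WL (Ks n) K) \<longlonglongrightarrow> 0"
    proof (rule ccontr)
      assume "\<not> (\<lambda>n. WL (Ks n) K) \<longlonglongrightarrow> 0"
      from not_tendsto_subseq[OF this] obtain e r where e: "0 < e" and r: "strict_mono (r :: nat \<Rightarrow> nat)"
        and er: "\<And>n. e \<le> \<bar>WL (Ks (r n)) K\<bar>" by blast
      from H r obtain s :: "nat \<Rightarrow> nat" and N where s: "strict_mono s" and N: "N \<in> null_sets torus"
        and wcN: "\<forall>x \<in> torus_set - N. weakly_conv (\<lambda>l. Ks (r (s l)) x) (K x)" by blast
      define \<phi> where "\<phi> l = r (s l)" for l
      have \<phi>: "strict_mono \<phi>" unfolding \<phi>_def using r s by (simp add: strict_mono_def)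
      have sq: "(\<lambda>l. \<integral> z. (snd z)\<^sup>2 \<partial>\<mu>s (\<phi> l)) \<longlonglongrightarrow> (\<integral> z. (snd z)\<^sup>2 \<partial>\<mu>)"
        using LIMSEQ_subseq_LIMSEQ[OF conjunct1[OF H] \<phi>] by (simp add: comp_def)
      have wc: "AE x in torus. weakly_conv (\<lambda>l. Ks (\<phi> l) x) (K x)"
        using AE_not_in[OF N] AE_space
        by eventually_elim (use wcN in \<open>auto simp: \<phi>_def space_torus\<close>)
      have L0: "(\<lambda>l. \<integral>\<^sup>+ x. ennreal ((W2 (Ks (\<phi> l) x) (K x))\<^sup>2) \<partial>torus) \<longlonglongrightarrow> 0"
        by (rule converse_main[where \<mu>s=\<mu>s and \<mu>=\<mu> and Ks=Ks and K=K and \<phi>=\<phi>, OF Ps P Ds D sq wc])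
      have "(\<lambda>l. enn2real (I (\<phi> l))) \<longlonglongrightarrow> enn2real 0"
        by (rule tendsto_enn2real) (use L0 in \<open>simp_all add: I_def\<close>)
      then have "(\<lambda>l. sqrt (enn2real (I (\<phi> l)))) \<longlonglongrightarrow> sqrt 0"
        by (intro tendsto_real_sqrt) simp
      then have "(\<lambda>l. WL (Ks (\<phi> l)) K) \<longlonglongrightarrow> 0" unfolding WLI by simp
      from LIMSEQ_D[OF this e] obtain M where "\<And>l. l \<ge> M \<Longrightarrow> \<bar>WL (Ks (\<phi> l)) K\<bar> < e" by auto
      then have "\<bar>WL (Ks (r (s M))) K\<bar> < e" unfolding \<phi>_def by auto
      with er[of "s M"] show False by simp
    qed
  qed
qed

end
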